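(* Assume $(\alpha_n)\in\ell^1(\mathbb Z)$, $\alpha_n=\overline{\alpha_{-n}}$, $\alpha_0=0$, $\sum_n\alpha_n=-\frac1{4\pi}$, and that $(\alpha_n)$ is generic. Then the solution $(q_n(p))\in\ell^2(\mathbb Z)$ of $$q_n(p)=-\frac{4\pi}{\sqrt{\omega n-ip}}\sum_{k\ne0}\alpha_kq_{n+k}(p)-\frac{2i\sqrt{2\pi}}{\sqrt{\omega n-ip}\,(1+\sqrt{\omega n-ip})},\qquad n\in\mathbb Z,$$ has, in a neighborhood of $p=0$ on the imaginary axis, the form $q_n(p)=c_n(p)+d_n(p)\sqrt p$ for all $n\in\mathbb Z$, where $c_n,d_n$ are analytic at $p=0$.
   Context: $\omega>0$ fixed; square roots use the principal branch ($\sqrt{\rho e^{i\vartheta}}=\sqrt\rho e^{i\vartheta/2}$, $-\pi<\vartheta\le\pi$). This system is the one satisfied by $q_n(p)=\tilde q(p+i\omega n)$, $0\le\Im p<\omega$, where $\tilde q$ is the Laplace transform of the charge associated with the time-periodic point interaction of strength $\alpha(t)=\sum_n\alpha_ne^{-in\omega t}$ and initial datum the bound state of $H_{\alpha(0)}$. Genericity: with $\tilde\alpha=(\alpha_1,\alpha_2,\dots)\in\ell^1(\mathbb N)$ and the shift $(\mathcal Ta)_n=a_{n+1}$ on $\ell^1(\mathbb N)$, $(\alpha_n)$ is generic if $e_1=(1,0,0,\dots)$ lies in the $\ell^1(\mathbb N)$-closure of the linear span of $\{\mathcal T^n\tilde\alpha:n\ge0\}$. *)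

theory Defs
  imports "HOL-Analysis.Analysis"
begin

text \<open>The sequence alpha-tilde = (alpha_1, alpha_2, ...) in l1(N), stored 0-based:
  position m holds alpha_(m+1).\<close>
definition alpha_tilde :: "(int \<Rightarrow> complex) \<Rightarrow> nat \<Rightarrow> complex" where
  "alpha_tilde \<alpha> m = \<alpha> (int m + 1)"

definition shiftT :: "(nat \<Rightarrow> complex) \<Rightarrow> nat \<Rightarrow> complex" where
  "shiftT a m = a (Suc m)"

definition e1 :: "nat \<Rightarrow> complex" where
  "e1 m = (if m = 0 then 1 else 0)"

definition l1norm :: "(nat \<Rightarrow> complex) \<Rightarrow> real" where
  "l1norm a = (\<Sum>m. norm (a m))"

text \<open>Genericity: e_1 lies in the l1-closure of span{T^n alpha-tilde : n \<ge> 0}.\<close>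
definition generic :: "(int \<Rightarrow> complex) \<Rightarrow> bool" where
  "generic \<alpha> \<longleftrightarrow> (\<forall>\<epsilon>>0. \<exists>N (b :: nat \<Rightarrow> complex).
      l1norm (\<lambda>m. e1 m - (\<Sum>j<N. b j * (shiftT ^^ j) (alpha_tilde \<alpha>) m)) < \<epsilon>)"

end

theory Submission
  imports Defs "HOL-Complex_Analysis.Complex_Analysis" "Jordan_Normal_Form.Determinant"
begin

lemma infsum_tail_small:
  fixes M :: "'i \<Rightarrow> real"
  assumes M: "M summable_on UNIV" and Mnn: "\<And>k. M k \<ge> 0" and e: "e > 0"
  shows "\<exists>X0. finite X0 \<and> (\<forall>X. finite X \<and> X0 \<subseteq> X \<longrightarrow> infsum M (UNIV - X) < e)"
proof -
  obtain X0 where X0: "finite X0" "dist (sum M X0) (infsum M UNIV) \<le> e/2"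
    using has_sum_finite_approximation[of M UNIV "infsum M UNIV" "e/2"] M e by auto
  have "infsum M (UNIV - X) < e" if "finite X" "X0 \<subseteq> X" for X
  proof -
    have s: "M summable_on (UNIV - X)" using M summable_on_subset_banach by blast
    have "infsum M UNIV = infsum M (UNIV - X) + infsum M X"
      using infsum_Un_disjoint[of M "UNIV - X" X] s that by auto
    moreover have "sum M X0 \<le> sum M X" using that Mnn by (intro sum_mono2) auto
    moreover have "infsum M (UNIV - X) \<ge> 0" using Mnn by (simp add: infsum_nonneg)
    ultimately show ?thesis using X0 that e by (auto simp: dist_real_def abs_if split: if_splits)
  qed
  then show ?thesis using X0 by blast
qed

lemma summable_bound:
  fixes f :: "'i \<Rightarrow> 'b::banach"
  assumes M: "M summable_on UNIV" and bd: "\<And>k. norm (f k) \<le> M k"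
  shows "f summable_on A" "(\<lambda>k. norm (f k)) summable_on A"
proof -
  have n: "(\<lambda>k. norm (f k)) summable_on UNIV"
    by (rule summable_on_comparison_test[OF M]) (use bd in auto)
  then show "(\<lambda>k. norm (f k)) summable_on A" by (rule summable_on_subset_banach) simp
  have "f summable_on UNIV" using n by (rule abs_summable_summable)
  then show "f summable_on A" by (rule summable_on_subset_banach) simp
qed

lemma norm_infsum_bound_M:
  fixes f :: "'i \<Rightarrow> 'b::banach"
  assumes M: "M summable_on UNIV" and bd: "\<And>k. norm (f k) \<le> M k"
  shows "norm (infsum f A) \<le> infsum M A"
  using norm_infsum_le[of f A "infsum f A" M "infsum M A"] summable_bound[OF M bd, of A]
    summable_on_subset_banach[OF M, of A] bd by auto

lemma holomorphic_infsum:
  fixes F :: "'i \<Rightarrow> complex \<Rightarrow> complex"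
  assumes S: "open S" and an: "\<And>k. F k holomorphic_on S"
    and bd: "\<And>k t. t \<in> S \<Longrightarrow> norm (F k t) \<le> M k" and M: "M summable_on UNIV"
    and Mnn: "\<And>k. M k \<ge> 0"
  shows "(\<lambda>t. \<Sum>\<^sub>\<infinity>k. F k t) holomorphic_on S"
proof -
  have summ: "(\<lambda>k. F k t) summable_on A" if "t \<in> S" for t A
    using summable_bound(1)[OF M bd[OF that]] .
  have loc: "(\<lambda>t. \<Sum>\<^sub>\<infinity>k. F k t) field_differentiable (at z)" if z: "z \<in> S" for z
  proof -
    obtain e where e: "e > 0" "cball z e \<subseteq> S" using S z open_contains_cball by blast
    let ?f = "\<lambda>X t. \<Sum>k\<in>X. F k t"
    have ul: "uniform_limit (cball z e) ?f (\<lambda>t. \<Sum>\<^sub>\<infinity>k. F k t) (finite_subsets_at_top UNIV)"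
    proof (rule uniform_limitI)
      fix d :: real assume d: "d > 0"
      obtain X0 where X0: "finite X0" "\<And>X. finite X \<Longrightarrow> X0 \<subseteq> X \<Longrightarrow> infsum M (UNIV - X) < d"
        using infsum_tail_small[OF M Mnn d] by blast
      show "\<forall>\<^sub>F X in finite_subsets_at_top UNIV. \<forall>t\<in>cball z e. dist (?f X t) (\<Sum>\<^sub>\<infinity>k. F k t) < d"
        unfolding eventually_finite_subsets_at_top
      proof (intro exI[of _ X0] conjI allI impI ballI)
        show "finite X0" by fact
        show "X0 \<subseteq> UNIV" by simp
        fix X t assume X: "finite X \<and> X0 \<subseteq> X \<and> X \<subseteq> UNIV" and t: "t \<in> cball z e"
        have tS: "t \<in> S" using t e by blast
        have un: "(UNIV - X) \<union> X = UNIV" by blast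
        have "(\<Sum>\<^sub>\<infinity>k\<in>(UNIV - X) \<union> X. F k t) = (\<Sum>\<^sub>\<infinity>k\<in>UNIV - X. F k t) + (\<Sum>\<^sub>\<infinity>k\<in>X. F k t)"
          by (rule infsum_Un_disjoint) (use summ[OF tS] in auto)
        then have "(\<Sum>\<^sub>\<infinity>k. F k t) = (\<Sum>\<^sub>\<infinity>k\<in>UNIV - X. F k t) + ?f X t"
          using X un by simp
        then have eq: "dist (?f X t) (\<Sum>\<^sub>\<infinity>k. F k t) = norm (\<Sum>\<^sub>\<infinity>k\<in>UNIV - X. F k t)"
          by (simp add: dist_norm)
        have "norm (\<Sum>\<^sub>\<infinity>k\<in>UNIV - X. F k t) \<le> infsum M (UNIV - X)"
          by (rule norm_infsum_bound_M[OF M bd[OF tS]])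
        moreover have "infsum M (UNIV - X) < d" using X0(2) X by blast
        ultimately show "dist (?f X t) (\<Sum>\<^sub>\<infinity>k. F k t) < d" using eq by linarith
      qed
    qed
    have ev: "\<forall>\<^sub>F X in finite_subsets_at_top UNIV. continuous_on (cball z e) (?f X) \<and> ?f X holomorphic_on ball z e"
    proof (intro always_eventually allI conjI)
      fix X
      have h: "?f X holomorphic_on S" by (rule holomorphic_on_sum) (rule an)
      show "continuous_on (cball z e) (?f X)"
        using holomorphic_on_imp_continuous_on[OF h] e continuous_on_subset by blast
      show "?f X holomorphic_on ball z e" using h e ball_subset_cball holomorphic_on_subset by blast
    qed
    have hol: "(\<lambda>t. \<Sum>\<^sub>\<infinity>k. F k t) holomorphic_on ball z e"
      by (rule holomorphic_uniform_limit[OF ev ul]) simp_all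
    show ?thesis by (rule holomorphic_on_imp_differentiable_at[OF hol]) (use e in simp_all)
  qed
  show ?thesis unfolding holomorphic_on_def
    using loc field_differentiable_at_within by blast
qed

lemma infsum_nat_shift:
  fixes f :: "nat \<Rightarrow> complex"
  assumes "f summable_on UNIV"
  shows "(\<Sum>\<^sub>\<infinity>j. f (Suc j)) = (\<Sum>\<^sub>\<infinity>j. f j) - f 0"
proof -
  have U: "UNIV = {0} \<union> range Suc" using not0_implies_Suc by auto
  have s1: "f summable_on range Suc" using assms summable_on_subset_banach by blast
  have "(\<Sum>\<^sub>\<infinity>j. f j) = (\<Sum>\<^sub>\<infinity>j\<in>{0} \<union> range Suc. f j)" using U by simp
  also have "\<dots> = (\<Sum>\<^sub>\<infinity>j\<in>{0}. f j) + (\<Sum>\<^sub>\<infinity>j\<in>range Suc. f j)"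
    by (rule infsum_Un_disjoint) (use s1 in auto)
  also have "(\<Sum>\<^sub>\<infinity>j\<in>range Suc. f j) = (\<Sum>\<^sub>\<infinity>j. f (Suc j))"
    using infsum_reindex[of Suc UNIV f] by (simp add: o_def)
  finally show ?thesis by simp
qed

lemma summable_prod_bound:
  fixes f :: "'a \<times> 'b \<Rightarrow> complex" and Ma :: "'a \<Rightarrow> real" and Mb :: "'b \<Rightarrow> real"
  assumes Ma: "Ma summable_on UNIV" and Mb: "Mb summable_on UNIV"
    and nn1: "\<And>x. Ma x \<ge> 0" and nn2: "\<And>y. Mb y \<ge> 0"
    and bd: "\<And>x y. norm (f (x, y)) \<le> Ma x * Mb y"
  shows "f summable_on UNIV"
proof -
  have P: "(\<lambda>(x, y). Ma x * Mb y) summable_on (UNIV :: ('a \<times> 'b) set)"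
  proof (rule nonneg_bdd_above_summable_on)
    show "0 \<le> (case z of (x, y) \<Rightarrow> Ma x * Mb y)" for z using nn1 nn2 by (cases z) auto
    show "bdd_above (sum (\<lambda>(x, y). Ma x * Mb y) ` {F. F \<subseteq> UNIV \<and> finite F})"
    proof (rule bdd_aboveI2)
      fix F :: "('a \<times> 'b) set" assume F: "F \<in> {F. F \<subseteq> UNIV \<and> finite F}"
      then have fin: "finite F" by simp
      have "sum (\<lambda>(x, y). Ma x * Mb y) F \<le> sum (\<lambda>(x, y). Ma x * Mb y) (fst ` F \<times> snd ` F)"
        by (rule sum_mono2) (use fin nn1 nn2 in \<open>auto intro: mult_nonneg_nonneg simp: rev_image_eqI\<close>)
      also have "\<dots> = sum Ma (fst ` F) * sum Mb (snd ` F)"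
        by (simp add: sum_product sum.cartesian_product)
      also have "\<dots> \<le> infsum Ma UNIV * infsum Mb UNIV"
        by (intro mult_mono finite_sum_le_infsum Ma Mb sum_nonneg infsum_nonneg)
           (use nn1 nn2 fin in auto)
      finally show "sum (\<lambda>(x, y). Ma x * Mb y) F \<le> infsum Ma UNIV * infsum Mb UNIV" .
    qed
  qed
  show ?thesis
    by (rule summable_bound(1)[OF P]) (use bd in \<open>auto split: prod.splits\<close>)
qed

lemma summable_finsum:
  fixes f :: "'i \<Rightarrow> 'a \<Rightarrow> complex"
  assumes "finite I" "\<And>i. i \<in> I \<Longrightarrow> f i summable_on A"
  shows "(\<lambda>x. \<Sum>i\<in>I. f i x) summable_on A"
  using assms
proof (induction I rule: finite_induct)
  case empty then show ?case by simp
next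
  case (insert j I)
  have "(\<lambda>x. f j x + (\<Sum>i\<in>I. f i x)) summable_on A"
    by (rule summable_on_add) (use insert in auto)
  then show ?case using insert by simp
qed

lemma infsum_finsum:
  fixes f :: "'i \<Rightarrow> 'a \<Rightarrow> complex"
  assumes "finite I" "\<And>i. i \<in> I \<Longrightarrow> f i summable_on A"
  shows "(\<Sum>\<^sub>\<infinity>x\<in>A. \<Sum>i\<in>I. f i x) = (\<Sum>i\<in>I. \<Sum>\<^sub>\<infinity>x\<in>A. f i x)"
  using assms
proof (induction I rule: finite_induct)
  case empty then show ?case by simp
next
  case (insert j I)
  have s: "(\<lambda>x. \<Sum>i\<in>I. f i x) summable_on A" by (rule summable_finsum) (use insert in auto)
  have "(\<Sum>\<^sub>\<infinity>x\<in>A. \<Sum>i\<in>insert j I. f i x) = (\<Sum>\<^sub>\<infinity>x\<in>A. f j x + (\<Sum>i\<in>I. f i x))"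
    using insert by simp
  also have "\<dots> = (\<Sum>\<^sub>\<infinity>x\<in>A. f j x) + (\<Sum>\<^sub>\<infinity>x\<in>A. \<Sum>i\<in>I. f i x)"
    by (rule infsum_add) (use insert s in auto)
  finally show ?case using insert by simp
qed

locale setting =
  fixes \<omega> :: real and \<alpha> :: "int \<Rightarrow> complex" and N :: int and r0 :: real
  assumes om: "\<omega> > 0" and asum: "(\<lambda>k. norm (\<alpha> k)) summable_on UNIV"
    and r0: "0 < r0" "r0 \<le> 1/2" "r0^2 \<le> \<omega>/2"
    and N1: "N \<ge> 1"
    and Nbig: "(8 * pi * ((\<Sum>\<^sub>\<infinity>k. norm (\<alpha> k)) + 1))^2 \<le> \<omega> * of_int N / 2"
begin

definition a where "a = (\<Sum>\<^sub>\<infinity>k. norm (\<alpha> k))"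

lemma a_nonneg: "a \<ge> 0" unfolding a_def by (simp add: infsum_nonneg)

lemma alpha_le_a: "norm (\<alpha> k) \<le> a"
  unfolding a_def using finite_sum_le_infsum[of "\<lambda>k. norm (\<alpha> k)" UNIV "{k}"] asum by auto

definition sig :: "int \<Rightarrow> complex \<Rightarrow> complex" where
  "sig n t = (if n = 0 then t else if n > 0 then csqrt (of_real (\<omega> * of_int n) + t^2)
              else \<i> * csqrt (of_real (- \<omega> * of_int n) - t^2))"

definition Kt :: "complex \<Rightarrow> (int \<Rightarrow> complex) \<Rightarrow> int \<Rightarrow> complex" where
  "Kt t u n = (if N \<le> \<bar>n\<bar> then - (4 * pi / sig n t) * (\<Sum>\<^sub>\<infinity>k. \<alpha> k * u (n + k)) else 0)"

lemma norm_t2: "(t::complex) \<in> ball 0 r0 \<Longrightarrow> norm (t^2) < \<omega>/2"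
proof -
  assume "t \<in> ball 0 r0"
  then have "norm t < r0" by simp
  then have "norm t ^ 2 < r0 ^ 2" using r0 by (intro power_strict_mono) auto
  moreover have "norm (t^2) = norm t ^ 2" by (rule norm_power)
  ultimately show ?thesis using r0 by linarith
qed

lemma Re_pos_arg:
  assumes t: "(t::complex) \<in> ball 0 r0" and n: "n > 0"
  shows "Re (of_real (\<omega> * of_int n) + t^2) > 0" "Re (of_real (\<omega> * of_int n) - t^2) > 0"
proof -
  have "\<bar>Re (t^2)\<bar> \<le> norm (t^2)" by (rule abs_Re_le_cmod)
  moreover have "norm (t^2) < \<omega>/2" using norm_t2[OF t] .
  moreover have "\<omega> * of_int n \<ge> \<omega> * 1" using om n by (intro mult_left_mono) auto
  moreover have "Re (of_real (\<omega> * of_int n) + t^2) = \<omega> * of_int n + Re (t^2)" by simp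
  moreover have "Re (of_real (\<omega> * of_int n) - t^2) = \<omega> * of_int n - Re (t^2)" by simp
  ultimately show "Re (of_real (\<omega> * of_int n) + t^2) > 0" "Re (of_real (\<omega> * of_int n) - t^2) > 0"
    using om by linarith+
qed

lemma sig_pos: "n > 0 \<Longrightarrow> sig n t = csqrt (of_real (\<omega> * of_int n) + t^2)"
  by (simp add: sig_def)
lemma sig_neg: "n < 0 \<Longrightarrow> sig n t = \<i> * csqrt (of_real (\<omega> * of_int (-n)) - t^2)"
  by (simp add: sig_def)
lemma sig_zero: "sig 0 t = t" by (simp add: sig_def)

lemma not_nonpos_Re: "Re z > 0 \<Longrightarrow> z \<notin> \<real>\<^sub>\<le>\<^sub>0"
  by (simp add: complex_nonpos_Reals_iff)

lemma sig_hol: "sig n holomorphic_on ball 0 r0"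
proof (cases "n = 0")
  case True then show ?thesis by (simp add: sig_zero[abs_def])
next
  case False
  show ?thesis
  proof (cases "n > 0")
    case True
    have "(\<lambda>t. csqrt (of_real (\<omega> * of_int n) + t^2)) holomorphic_on ball 0 r0"
      by (intro holomorphic_intros not_nonpos_Re Re_pos_arg True) auto
    moreover have "sig n = (\<lambda>t. csqrt (of_real (\<omega> * of_int n) + t^2))"
      using True by (intro ext) (simp add: sig_pos)
    ultimately show ?thesis by simp
  next
    case f: False
    then have n: "-n > 0" using False by simp
    have "(\<lambda>t. \<i> * csqrt (of_real (\<omega> * of_int (-n)) - t^2)) holomorphic_on ball 0 r0"
      by (intro holomorphic_intros not_nonpos_Re Re_pos_arg n) auto
    moreover have "sig n = (\<lambda>t. \<i> * csqrt (of_real (\<omega> * of_int (-n)) - t^2))"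
      using f False by (intro ext) (simp add: sig_neg)
    ultimately show ?thesis by simp
  qed
qed

lemma norm_sig_sq:
  assumes "n \<noteq> 0"
  shows "norm (sig n t) ^ 2 = norm (of_real (\<omega> * of_int n) + t^2)"
proof (cases "n > 0")
  case True then show ?thesis by (simp add: sig_pos)
next
  case False
  then have "norm (sig n t) ^ 2 = norm (of_real (\<omega> * of_int (-n)) - t^2)"
    using assms by (simp add: sig_neg norm_mult)
  also have "\<dots> = norm (- (of_real (\<omega> * of_int n) + t^2))" by (simp add: algebra_simps)
  finally show ?thesis by (simp only: norm_minus_cancel)
qed

lemma sig_tail:
  assumes t: "t \<in> ball 0 r0" and n: "N \<le> \<bar>n\<bar>"
  shows "8 * pi * (a + 1) \<le> norm (sig n t)"
proof -
  have n0: "n \<noteq> 0" using n N1 by auto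
  have "norm (of_real (\<omega> * of_int n) + t^2) \<ge> norm (of_real (\<omega> * of_int n) :: complex) - norm (t^2)"
    by (rule norm_diff_ineq)
  moreover have "norm (of_real (\<omega> * of_int n) :: complex) = \<bar>\<omega> * of_int n\<bar>"
    by (rule norm_of_real)
  moreover have "\<bar>\<omega> * of_int n\<bar> = \<omega> * \<bar>of_int n\<bar>" using om by (simp add: abs_mult)
  moreover have "\<omega> * \<bar>of_int n\<bar> \<ge> \<omega> * of_int N" using om n by simp
  moreover have "\<omega> * of_int N \<ge> \<omega>" using om N1 by simp
  ultimately have "norm (sig n t) ^ 2 \<ge> \<omega> * of_int N / 2"
    using norm_sig_sq[OF n0, of t] norm_t2[OF t] by linarith
  then have "(8 * pi * (a + 1))^2 \<le> norm (sig n t) ^ 2" using Nbig unfolding a_def by linarith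
  then show ?thesis using power2_le_imp_le norm_ge_zero by blast
qed

lemma sig_tail': "t \<in> ball 0 r0 \<Longrightarrow> N \<le> \<bar>n\<bar> \<Longrightarrow> 2 \<le> norm (sig n t)"
  "t \<in> ball 0 r0 \<Longrightarrow> N \<le> \<bar>n\<bar> \<Longrightarrow> 8 * pi * a \<le> norm (sig n t)"
  "t \<in> ball 0 r0 \<Longrightarrow> N \<le> \<bar>n\<bar> \<Longrightarrow> sig n t \<noteq> 0"
proof -
  assume t: "t \<in> ball 0 r0" and n: "N \<le> \<bar>n\<bar>"
  have e1: "8 * pi * (a + 1) = 8 * pi * a + 8 * pi" by (simp add: algebra_simps)
  have e2: "8 * pi * a \<ge> 0" using a_nonneg by simp
  have e3: "8 * pi \<ge> 2" using pi_gt3 by simp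
  have s: "8 * pi * (a + 1) \<le> norm (sig n t)" by (rule sig_tail[OF t n])
  from s e1 e2 e3 have "2 \<le> norm (sig n t)" by linarith
  moreover from s e1 e2 e3 have "8 * pi * a \<le> norm (sig n t)" by linarith
  ultimately show "2 \<le> norm (sig n t)" "8 * pi * a \<le> norm (sig n t)" "sig n t \<noteq> 0"
    by auto
qed

lemma sig_nz: "t \<in> ball 0 r0 \<Longrightarrow> n \<noteq> 0 \<Longrightarrow> sig n t \<noteq> 0"
proof -
  assume t: "t \<in> ball 0 r0" and n: "n \<noteq> 0"
  show ?thesis
  proof (cases "n > 0")
    case True
    have "of_real (\<omega> * of_int n) + t^2 \<noteq> 0" using Re_pos_arg(1)[OF t True]
      by (metis less_irrefl zero_complex.sel(1))
    then show ?thesis using True by (simp add: sig_pos)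
  next
    case False
    then have "-n > 0" using n by simp
    then have "of_real (\<omega> * of_int (-n)) - t^2 \<noteq> 0" using Re_pos_arg(2)[OF t, of "-n"]
      by (metis less_irrefl zero_complex.sel(1))
    then have "csqrt (of_real (\<omega> * of_int (-n)) - t^2) \<noteq> 0" by simp
    then have c: "\<i> * csqrt (of_real (\<omega> * of_int (-n)) - t^2) \<noteq> 0" by simp
    have nlt: "n < 0" using False n by simp
    show ?thesis by (subst sig_neg[OF nlt]) (rule c)
  qed
qed

lemma csqrt_Re_pos: "Re z > 0 \<Longrightarrow> Re (csqrt z) > 0"
proof -
  assume z: "Re z > 0"
  have "Re (csqrt z) \<noteq> 0"
  proof
    assume h: "Re (csqrt z) = 0"
    have e: "Re ((csqrt z)^2) = Re z" by simp
    have "Re ((csqrt z)^2) = - (Im (csqrt z) * Im (csqrt z))" using h by (simp add: power2_eq_square)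
    then have "Re z = - (Im (csqrt z) * Im (csqrt z))" using e by simp
    then show False using z zero_le_square[of "Im (csqrt z)"] by linarith
  qed
  then show ?thesis using Re_csqrt[of z] by linarith
qed

lemma one_plus_sig_nz: "t \<in> ball 0 r0 \<Longrightarrow> 1 + sig n t \<noteq> 0"
proof -
  assume t: "t \<in> ball 0 r0"
  show ?thesis
  proof (cases "n = 0")
    case True
    have "norm t < 1" using t r0 by simp
    then have "t \<noteq> -1" by auto
    then show ?thesis using True by (simp add: sig_zero add_eq_0_iff)
  next
    case n0: False
    show ?thesis
    proof (cases "n > 0")
      case True
      have "Re (sig n t) \<ge> 0" using Re_csqrt by (metis sig_pos True)
      show ?thesis
      proof
        assume "1 + sig n t = 0"
        then have "sig n t = -1" by (simp add: add_eq_0_iff)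
        then show False using \<open>Re (sig n t) \<ge> 0\<close> by simp
      qed
    next
      case False
      then have nn: "-n > 0" using n0 by simp
      let ?w = "csqrt (of_real (\<omega> * of_int (-n)) - t^2)"
      have "Re ?w > 0" by (rule csqrt_Re_pos[OF Re_pos_arg(2)[OF t nn]])
      moreover have "1 + sig n t = 1 + \<i> * ?w" by (subst sig_neg) (use nn in auto)
      moreover have "Im (1 + \<i> * ?w) = Re ?w" by simp
      ultimately show ?thesis by (metis zero_complex.simps(2) less_irrefl)
    qed
  qed
qed


lemma summable_au:
  assumes "\<And>m. norm (u m) \<le> C"
  shows "(\<lambda>k. \<alpha> k * u (n + k)) summable_on A"
proof (rule summable_bound(1)[of "\<lambda>k. norm (\<alpha> k) * C"])
  show "(\<lambda>k. norm (\<alpha> k) * C) summable_on UNIV" by (rule summable_on_cmult_left[OF asum])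
  show "norm (\<alpha> k * u (n + k)) \<le> norm (\<alpha> k) * C" for k
    unfolding norm_mult by (rule mult_left_mono[OF assms]) simp
qed

lemma norm_sum_au:
  assumes "\<And>m. norm (u m) \<le> C"
  shows "norm (\<Sum>\<^sub>\<infinity>k. \<alpha> k * u (n + k)) \<le> a * C"
proof -
  have "norm (\<Sum>\<^sub>\<infinity>k. \<alpha> k * u (n + k)) \<le> (\<Sum>\<^sub>\<infinity>k. norm (\<alpha> k) * C)"
  proof (rule norm_infsum_bound_M)
    show "(\<lambda>k. norm (\<alpha> k) * C) summable_on UNIV" by (rule summable_on_cmult_left[OF asum])
    show "norm (\<alpha> k * u (n + k)) \<le> norm (\<alpha> k) * C" for k
      unfolding norm_mult by (rule mult_left_mono[OF assms]) simp
  qed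
  also have "(\<Sum>\<^sub>\<infinity>k. norm (\<alpha> k) * C) = a * C" unfolding a_def by (rule infsum_cmult_left') 
  finally show ?thesis .
qed

lemma Kt_bound:
  assumes t: "t \<in> ball 0 r0" and u: "\<And>m. norm (u m) \<le> C"
  shows "norm (Kt t u n) \<le> C / 2"
proof -
  have C0: "C \<ge> 0" using u[of 0] norm_ge_zero order_trans by blast
  show ?thesis
  proof (cases "N \<le> \<bar>n\<bar>")
    case False then show ?thesis using C0 by (simp add: Kt_def)
  next
    case True
    let ?s = "norm (sig n t)"
    have s: "8 * pi * a \<le> ?s" "2 \<le> ?s" using sig_tail'[OF t True] by auto
    have "norm (Kt t u n) = 4 * pi / ?s * norm (\<Sum>\<^sub>\<infinity>k. \<alpha> k * u (n + k))"
      using True by (simp add: Kt_def norm_mult norm_divide)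
    also have "\<dots> \<le> 4 * pi / ?s * (a * C)"
      by (rule mult_left_mono[OF norm_sum_au[OF u]]) simp
    also have "\<dots> \<le> C / 2"
    proof -
      have sp: "?s > 0" using s(2) by linarith
      have m: "8 * pi * a * C \<le> C * ?s" using mult_right_mono[OF s(1) C0] by (simp add: mult.commute)
      have "4 * pi / ?s * (a * C) = (8 * pi * a * C / ?s) / 2" by (simp add: field_simps)
      also have "8 * pi * a * C / ?s \<le> C" by (subst pos_divide_le_eq[OF sp]) (rule m)
      then have "(8 * pi * a * C / ?s) / 2 \<le> C / 2" by (rule divide_right_mono) simp
      finally show ?thesis .
    qed
    finally show ?thesis .
  qed
qed

primrec Fj :: "(int \<Rightarrow> complex \<Rightarrow> complex) \<Rightarrow> nat \<Rightarrow> int \<Rightarrow> complex \<Rightarrow> complex" where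
  "Fj h 0 = (\<lambda>n t. if N \<le> \<bar>n\<bar> then h n t else 0)"
| "Fj h (Suc j) = (\<lambda>n t. Kt t (\<lambda>m. Fj h j m t) n)"

definition Ufix :: "(int \<Rightarrow> complex \<Rightarrow> complex) \<Rightarrow> int \<Rightarrow> complex \<Rightarrow> complex" where
  "Ufix h n t = (\<Sum>\<^sub>\<infinity>j. Fj h j n t)"

lemma Fj_bound:
  assumes h: "\<And>n t. t \<in> ball 0 r0 \<Longrightarrow> norm (h n t) \<le> C" and C0: "C \<ge> 0" and t: "t \<in> ball 0 r0"
  shows "norm (Fj h j n t) \<le> C / 2^j"
proof (induction j arbitrary: n)
  case 0 then show ?case using h[OF t] C0 by simp
next
  case (Suc j)
  have "norm (Kt t (\<lambda>m. Fj h j m t) n) \<le> (C / 2^j) / 2" by (rule Kt_bound[OF t Suc])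
  then show ?case by simp
qed

lemma Kt_head: "\<not> N \<le> \<bar>n\<bar> \<Longrightarrow> Kt t u n = 0" by (simp add: Kt_def)

lemma Fj_head: "\<not> N \<le> \<bar>n\<bar> \<Longrightarrow> Fj h j n t = 0"
  by (cases j) (simp_all add: Kt_head)

lemma Kt_hol:
  assumes hol: "\<And>m. F m holomorphic_on ball 0 r0"
    and bd: "\<And>m t. t \<in> ball 0 r0 \<Longrightarrow> norm (F m t) \<le> C"
  shows "(\<lambda>t. Kt t (\<lambda>m. F m t) n) holomorphic_on ball 0 r0"
proof (cases "N \<le> \<bar>n\<bar>")
  case False
  then have "(\<lambda>t. Kt t (\<lambda>m. F m t) n) = (\<lambda>t. 0)" by (intro ext) (rule Kt_head)
  then show ?thesis by (simp only: holomorphic_on_const)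
next
  case True
  have "norm (F 0 0) \<le> C" by (rule bd) (use r0 in simp)
  then have C0: "C \<ge> 0" using norm_ge_zero order_trans by blast
  have S: "(\<lambda>t. \<Sum>\<^sub>\<infinity>k. \<alpha> k * F (n + k) t) holomorphic_on ball 0 r0"
  proof (rule holomorphic_infsum[where M = "\<lambda>k. norm (\<alpha> k) * C"])
    show "(\<lambda>t. \<alpha> k * F (n + k) t) holomorphic_on ball 0 r0" for k
      by (intro holomorphic_intros hol)
    show "norm (\<alpha> k * F (n + k) t) \<le> norm (\<alpha> k) * C" if "t \<in> ball 0 r0" for k t
      unfolding norm_mult by (rule mult_left_mono[OF bd[OF that]]) simp
    show "(\<lambda>k. norm (\<alpha> k) * C) summable_on UNIV" by (rule summable_on_cmult_left[OF asum])
    show "0 \<le> norm (\<alpha> k) * C" for k using C0 by simp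
  qed simp
  have "(\<lambda>t. - (4 * pi / sig n t) * (\<Sum>\<^sub>\<infinity>k. \<alpha> k * F (n + k) t)) holomorphic_on ball 0 r0"
    by (intro holomorphic_intros S sig_hol) (use sig_tail'(3) True in auto)
  then show ?thesis using True by (simp add: Kt_def)
qed

lemma Fj_hol:
  assumes hol: "\<And>n. h n holomorphic_on ball 0 r0"
    and h: "\<And>n t. t \<in> ball 0 r0 \<Longrightarrow> norm (h n t) \<le> C" and C0: "C \<ge> 0"
  shows "Fj h j n holomorphic_on ball 0 r0"
proof (induction j arbitrary: n)
  case 0
  show ?case
  proof (cases "N \<le> \<bar>n\<bar>")
    case True
    then have "Fj h 0 n = h n" by (intro ext) simp
    then show ?thesis using hol by simp
  next
    case False
    then have "Fj h 0 n = (\<lambda>t. 0)" by (intro ext) simp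
    then show ?thesis by simp
  qed
next
  case (Suc j)
  have "(\<lambda>t. Kt t (\<lambda>m. Fj h j m t) n) holomorphic_on ball 0 r0"
    by (rule Kt_hol[OF Suc Fj_bound[OF h C0]])
  then show ?case by simp
qed

lemma geom_has_sum: "((\<lambda>j::nat. C / 2^j) has_sum (2 * C)) UNIV" if "C \<ge> 0" for C :: real
proof -
  have "(\<lambda>j::nat. C * (1/2)^j) sums (C * (1 / (1 - 1/2)))"
    by (intro sums_mult geometric_sums) simp
  then have "(\<lambda>j::nat. C / 2^j) sums (2 * C)" by (simp add: power_one_over field_simps)
  then show ?thesis by (rule sums_nonneg_imp_has_sum) (use that in simp)
qed

lemma Ufix_bound:
  assumes h: "\<And>n t. t \<in> ball 0 r0 \<Longrightarrow> norm (h n t) \<le> C" and C0: "C \<ge> 0" and t: "t \<in> ball 0 r0"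
  shows "norm (Ufix h n t) \<le> 2 * C"
proof -
  have g: "((\<lambda>j::nat. C / 2^j) has_sum (2 * C)) UNIV" by (rule geom_has_sum[OF C0])
  have "norm (Ufix h n t) \<le> (\<Sum>\<^sub>\<infinity>j. C / 2^j)" unfolding Ufix_def
    by (rule norm_infsum_bound_M) (use g Fj_bound[OF h C0 t] in \<open>auto simp: has_sum_iff\<close>)
  then show ?thesis using g by (simp add: has_sum_iff)
qed

lemma Fj_summable:
  assumes h: "\<And>n t. t \<in> ball 0 r0 \<Longrightarrow> norm (h n t) \<le> C" and C0: "C \<ge> 0" and t: "t \<in> ball 0 r0"
  shows "(\<lambda>j. Fj h j n t) summable_on A"
  by (rule summable_bound(1)[of "\<lambda>j. C / 2^j"])
     (use geom_has_sum[OF C0] Fj_bound[OF h C0 t] in \<open>auto simp: has_sum_iff\<close>)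

lemma Ufix_hol:
  assumes hol: "\<And>n. h n holomorphic_on ball 0 r0"
    and h: "\<And>n t. t \<in> ball 0 r0 \<Longrightarrow> norm (h n t) \<le> C" and C0: "C \<ge> 0"
  shows "Ufix h n holomorphic_on ball 0 r0"
proof -
  have "(\<lambda>t. \<Sum>\<^sub>\<infinity>j. Fj h j n t) holomorphic_on ball 0 r0"
    by (rule holomorphic_infsum[where M = "\<lambda>j. C / 2^j"])
       (use Fj_hol[OF hol h C0] Fj_bound[OF h C0] geom_has_sum[OF C0] C0 in \<open>auto simp: has_sum_iff\<close>)
  then show ?thesis by (simp add: Ufix_def[abs_def])
qed

lemma Ufix_head: "\<not> N \<le> \<bar>n\<bar> \<Longrightarrow> Ufix h n t = 0"
  by (simp add: Ufix_def Fj_head)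

lemma Ufix_fix:
  assumes h: "\<And>n t. t \<in> ball 0 r0 \<Longrightarrow> norm (h n t) \<le> C" and C0: "C \<ge> 0" and t: "t \<in> ball 0 r0"
    and n: "N \<le> \<bar>n\<bar>"
  shows "Ufix h n t = Kt t (\<lambda>m. Ufix h m t) n + h n t"
proof -
  let ?F = "\<lambda>j m. Fj h j m t"
  have prod: "(\<lambda>(k, j). \<alpha> k * ?F j (n + k)) summable_on UNIV"
  proof (rule summable_prod_bound[where Ma = "\<lambda>k. norm (\<alpha> k)" and Mb = "\<lambda>j. C / 2^j"])
    show "(\<lambda>k. norm (\<alpha> k)) summable_on UNIV" by (rule asum)
    show "(\<lambda>j::nat. C / 2^j) summable_on UNIV" using geom_has_sum[OF C0] by (simp add: has_sum_iff)
    show "norm (case (k, j) of (k, j) \<Rightarrow> \<alpha> k * ?F j (n + k)) \<le> norm (\<alpha> k) * (C / 2^j)" for k j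
      unfolding norm_mult prod.case by (rule mult_left_mono[OF Fj_bound[OF h C0 t] norm_ge_zero])
  qed (use C0 in auto)
  have "(\<Sum>\<^sub>\<infinity>k. \<alpha> k * Ufix h (n + k) t) = (\<Sum>\<^sub>\<infinity>k. \<Sum>\<^sub>\<infinity>j. \<alpha> k * ?F j (n + k))"
    unfolding Ufix_def by (intro infsum_cong infsum_cmult_right[symmetric] Fj_summable[OF h C0 t])
  also have "\<dots> = (\<Sum>\<^sub>\<infinity>j. \<Sum>\<^sub>\<infinity>k. \<alpha> k * ?F j (n + k))"
    by (rule infsum_swap_banach) (use prod in simp)
  finally have e1: "(\<Sum>\<^sub>\<infinity>k. \<alpha> k * Ufix h (n + k) t) = (\<Sum>\<^sub>\<infinity>j. \<Sum>\<^sub>\<infinity>k. \<alpha> k * ?F j (n + k))" .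
  have "Kt t (\<lambda>m. Ufix h m t) n = - (4 * pi / sig n t) * (\<Sum>\<^sub>\<infinity>j. \<Sum>\<^sub>\<infinity>k. \<alpha> k * ?F j (n + k))"
    using n e1 by (simp add: Kt_def)
  also have "\<dots> = (\<Sum>\<^sub>\<infinity>j. - (4 * pi / sig n t) * (\<Sum>\<^sub>\<infinity>k. \<alpha> k * ?F j (n + k)))"
    by (rule infsum_cmult_right'[symmetric])
  also have "\<dots> = (\<Sum>\<^sub>\<infinity>j. ?F (Suc j) n)" using n by (simp add: Kt_def)
  also have "\<dots> = Ufix h n t - h n t"
    unfolding Ufix_def by (subst infsum_nat_shift) (use Fj_summable[OF h C0 t] n in auto)
  finally show ?thesis by simp
qed

lemma Kt_unique:
  assumes t: "t \<in> ball 0 r0" and wb: "\<And>m. norm (w m) \<le> C"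
    and wh: "\<And>m. \<not> N \<le> \<bar>m\<bar> \<Longrightarrow> w m = 0"
    and wf: "\<And>m. N \<le> \<bar>m\<bar> \<Longrightarrow> w m = Kt t w m"
  shows "w n = 0"
proof -
  have C0: "C \<ge> 0" using wb[of 0] norm_ge_zero order_trans by blast
  have bj: "norm (w m) \<le> C / 2^j" for j m
  proof (induction j arbitrary: m)
    case 0 then show ?case using wb by simp
  next
    case (Suc j)
    show ?case
    proof (cases "N \<le> \<bar>m\<bar>")
      case True
      have "norm (Kt t w m) \<le> (C / 2^j) / 2" by (rule Kt_bound[OF t Suc])
      then show ?thesis using wf[OF True] by simp
    next
      case False then show ?thesis using wh C0 by simp
    qed
  qed
  have "(\<lambda>j. C / 2^j) \<longlonglongrightarrow> 0" by (rule LIMSEQ_divide_realpow_zero) simp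
  then have "norm (w n) \<le> 0" by (rule LIMSEQ_le_const) (use bj in auto)
  then show ?thesis by simp
qed

lemma Kt_add:
  assumes "\<And>m. norm (u m) \<le> C" "\<And>m. norm (v m) \<le> D"
  shows "Kt t (\<lambda>m. u m + v m) n = Kt t u n + Kt t v n"
proof -
  have "(\<Sum>\<^sub>\<infinity>k. \<alpha> k * (u (n + k) + v (n + k))) = (\<Sum>\<^sub>\<infinity>k. \<alpha> k * u (n + k) + \<alpha> k * v (n + k))"
    by (simp add: distrib_left)
  also have "\<dots> = (\<Sum>\<^sub>\<infinity>k. \<alpha> k * u (n + k)) + (\<Sum>\<^sub>\<infinity>k. \<alpha> k * v (n + k))"
    by (rule infsum_add) (use summable_au assms in auto)
  finally show ?thesis by (simp add: Kt_def distrib_left)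
qed

lemma Kt_cmult: "Kt t (\<lambda>m. c * u m) n = c * Kt t u n"
proof -
  have "(\<Sum>\<^sub>\<infinity>k. \<alpha> k * (c * u (n + k))) = c * (\<Sum>\<^sub>\<infinity>k. \<alpha> k * u (n + k))"
    by (subst infsum_cmult_right'[symmetric]) (simp add: algebra_simps)
  then show ?thesis by (simp add: Kt_def)
qed

lemma Kt_finsum:
  assumes I: "finite I" and b: "\<And>i m. i \<in> I \<Longrightarrow> norm (u i m) \<le> C"
  shows "Kt t (\<lambda>m. \<Sum>i\<in>I. c i * u i m) n = (\<Sum>i\<in>I. c i * Kt t (u i) n)"
proof -
  have "(\<Sum>\<^sub>\<infinity>k. \<alpha> k * (\<Sum>i\<in>I. c i * u i (n + k))) = (\<Sum>\<^sub>\<infinity>k. \<Sum>i\<in>I. c i * (\<alpha> k * u i (n + k)))"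
    by (simp add: sum_distrib_left algebra_simps)
  also have "\<dots> = (\<Sum>i\<in>I. \<Sum>\<^sub>\<infinity>k. c i * (\<alpha> k * u i (n + k)))"
  proof (rule infsum_finsum[OF I])
    fix i assume i: "i \<in> I"
    have "(\<lambda>k. \<alpha> k * u i (n + k)) summable_on UNIV" by (rule summable_au[OF b[OF i]])
    then show "(\<lambda>k. c i * (\<alpha> k * u i (n + k))) summable_on UNIV" by (rule summable_on_cmult_right)
  qed
  also have "\<dots> = (\<Sum>i\<in>I. c i * (\<Sum>\<^sub>\<infinity>k. \<alpha> k * u i (n + k)))"
    by (simp add: infsum_cmult_right')
  finally show ?thesis by (simp add: Kt_def sum_distrib_left algebra_simps)
qed

end

lemma infsum_shift_int:
  fixes f :: "int \<Rightarrow> complex"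
  shows "(\<Sum>\<^sub>\<infinity>k. f (n + k)) = (\<Sum>\<^sub>\<infinity>m. f m)"
  by (rule infsum_reindex_bij_witness[of UNIV "\<lambda>m. m - n" "\<lambda>k. n + k"]) auto

lemma summable_shift_int:
  fixes f :: "int \<Rightarrow> complex"
  shows "(\<lambda>k. f (n + k)) summable_on UNIV \<longleftrightarrow> f summable_on UNIV"
  by (rule summable_on_reindex_bij_witness[of UNIV "\<lambda>m. m - n" "\<lambda>k. n + k"]) auto

lemma infsum_finite_support:
  fixes g :: "int \<Rightarrow> complex"
  assumes "finite H" "\<And>m. m \<notin> H \<Longrightarrow> g m = 0"
  shows "(\<Sum>\<^sub>\<infinity>m. g m) = (\<Sum>m\<in>H. g m)"
proof -
  have "(\<Sum>\<^sub>\<infinity>m. g m) = (\<Sum>\<^sub>\<infinity>m\<in>H. g m)" by (rule infsum_cong_neutral) (use assms in auto)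
  also have "\<dots> = (\<Sum>m\<in>H. g m)" using assms by simp
  finally show ?thesis .
qed

context setting
begin

definition Hd :: "int set" where "Hd = {n. \<bar>n\<bar> < N}"

lemma Hd_finite: "finite Hd"
proof -
  have "Hd = {-N<..<N}" unfolding Hd_def by auto
  then show ?thesis by simp
qed

lemma Hd_iff: "n \<in> Hd \<longleftrightarrow> \<not> N \<le> \<bar>n\<bar>" unfolding Hd_def by auto

definition c0 :: complex where "c0 = 2 * \<i> * complex_of_real (sqrt (2 * pi))"

definition em :: "int \<Rightarrow> int \<Rightarrow> complex \<Rightarrow> complex" where
  "em m n t = (if N \<le> \<bar>n\<bar> then - (4 * pi / sig n t) * \<alpha> (m - n) else 0)"

definition f0 :: "int \<Rightarrow> complex \<Rightarrow> complex" where
  "f0 n t = (if N \<le> \<bar>n\<bar> then - c0 / (sig n t * (1 + sig n t)) else 0)"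

definition U :: "int \<Rightarrow> int \<Rightarrow> complex \<Rightarrow> complex" where "U m = Ufix (em m)"
definition U0 :: "int \<Rightarrow> complex \<Rightarrow> complex" where "U0 = Ufix f0"

definition Mx :: "int \<Rightarrow> int \<Rightarrow> complex \<Rightarrow> complex" where
  "Mx n m t = (if n = m then sig n t else 0) + 4 * pi * \<alpha> (m - n) + 4 * pi * (\<Sum>\<^sub>\<infinity>k. \<alpha> k * U m (n + k) t)"

definition bx :: "int \<Rightarrow> complex \<Rightarrow> complex" where
  "bx n t = - c0 / (1 + sig n t) - 4 * pi * (\<Sum>\<^sub>\<infinity>k. \<alpha> k * U0 (n + k) t)"

lemma em_bound: "t \<in> ball 0 r0 \<Longrightarrow> norm (em m n t) \<le> 1"
proof -
  assume t: "t \<in> ball 0 r0"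
  show ?thesis
  proof (cases "N \<le> \<bar>n\<bar>")
    case False then show ?thesis by (simp add: em_def)
  next
    case True
    let ?s = "norm (sig n t)"
    have s: "8 * pi * a \<le> ?s" "2 \<le> ?s" using sig_tail'[OF t True] by auto
    have sp: "?s > 0" using s(2) by linarith
    have "4 * pi * norm (\<alpha> (m - n)) \<le> 4 * pi * a" using alpha_le_a by simp
    also have "\<dots> \<le> ?s" using s(1) mult_nonneg_nonneg[OF pi_ge_zero a_nonneg] by linarith
    finally have "4 * pi * norm (\<alpha> (m - n)) / ?s \<le> 1" using sp by simp
    then show ?thesis using True by (simp add: em_def norm_mult norm_divide)
  qed
qed

lemma f0_bound: "t \<in> ball 0 r0 \<Longrightarrow> norm (f0 n t) \<le> sqrt (2 * pi)"
proof -
  assume t: "t \<in> ball 0 r0"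
  show ?thesis
  proof (cases "N \<le> \<bar>n\<bar>")
    case False then show ?thesis by (simp add: f0_def)
  next
    case True
    let ?s = "norm (sig n t)"
    have s: "2 \<le> ?s" using sig_tail'[OF t True] by auto
    have s1: "norm (1 + sig n t) \<ge> 1"
    proof -
      have "norm (sig n t) \<le> norm (1 + sig n t) + norm (1::complex)"
        using norm_triangle_ineq4[of "1 + sig n t" 1] by simp
      then show ?thesis using s by simp
    qed
    have m2: "2 * 1 \<le> ?s * norm (1 + sig n t)" by (rule mult_mono) (use s s1 in auto)
    have nc: "norm c0 = 2 * sqrt (2 * pi)" by (simp add: c0_def norm_mult)
    have "norm (c0 / (sig n t * (1 + sig n t))) = 2 * sqrt (2 * pi) / (?s * norm (1 + sig n t))"
      by (simp add: norm_divide norm_mult nc)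
    also have "\<dots> \<le> 2 * sqrt (2 * pi) / 2"
      by (rule divide_left_mono) (use m2 in auto)
    finally have "norm (c0 / (sig n t * (1 + sig n t))) \<le> 2 * sqrt (2 * pi) / 2" .
    then show ?thesis using True by (simp add: f0_def)
  qed
qed

lemma em_hol: "em m n holomorphic_on ball 0 r0"
proof (cases "N \<le> \<bar>n\<bar>")
  case True
  have "(\<lambda>t. - (4 * pi / sig n t) * \<alpha> (m - n)) holomorphic_on ball 0 r0"
    by (intro holomorphic_intros sig_hol) (use sig_tail'(3) True in auto)
  moreover have "em m n = (\<lambda>t. - (4 * pi / sig n t) * \<alpha> (m - n))"
    using True by (intro ext) (simp add: em_def)
  ultimately show ?thesis by simp
next
  case False
  then have "em m n = (\<lambda>t. 0)" by (intro ext) (simp add: em_def)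
  then show ?thesis by (simp only: holomorphic_on_const)
qed

lemma f0_hol: "f0 n holomorphic_on ball 0 r0"
proof (cases "N \<le> \<bar>n\<bar>")
  case True
  have "(\<lambda>t. - c0 / (sig n t * (1 + sig n t))) holomorphic_on ball 0 r0"
    by (intro holomorphic_intros sig_hol) (use sig_tail'(3) True one_plus_sig_nz in auto)
  moreover have "f0 n = (\<lambda>t. - c0 / (sig n t * (1 + sig n t)))"
    using True by (intro ext) (simp add: f0_def)
  ultimately show ?thesis by simp
next
  case False
  then have "f0 n = (\<lambda>t. 0)" by (intro ext) (simp add: f0_def)
  then show ?thesis by (simp only: holomorphic_on_const)
qed

lemma U_bound: "t \<in> ball 0 r0 \<Longrightarrow> norm (U m n t) \<le> 2"
  unfolding U_def using Ufix_bound[of "em m" 1 t n] em_bound by simp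

lemma U0_bound: "t \<in> ball 0 r0 \<Longrightarrow> norm (U0 n t) \<le> 2 * sqrt (2 * pi)"
  unfolding U0_def by (rule Ufix_bound[OF f0_bound]) auto

lemma U_hol: "U m n holomorphic_on ball 0 r0"
  unfolding U_def by (rule Ufix_hol[OF em_hol em_bound]) auto

lemma U0_hol: "U0 n holomorphic_on ball 0 r0"
  unfolding U0_def by (rule Ufix_hol[OF f0_hol f0_bound]) auto

lemma U_fix: "t \<in> ball 0 r0 \<Longrightarrow> N \<le> \<bar>n\<bar> \<Longrightarrow> U m n t = Kt t (\<lambda>k. U m k t) n + em m n t"
  unfolding U_def by (rule Ufix_fix[OF em_bound]) auto

lemma U0_fix: "t \<in> ball 0 r0 \<Longrightarrow> N \<le> \<bar>n\<bar> \<Longrightarrow> U0 n t = Kt t (\<lambda>k. U0 k t) n + f0 n t"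
  unfolding U0_def by (rule Ufix_fix[OF f0_bound]) auto

lemma U_head: "\<not> N \<le> \<bar>n\<bar> \<Longrightarrow> U m n t = 0" unfolding U_def by (rule Ufix_head)
lemma U0_head: "\<not> N \<le> \<bar>n\<bar> \<Longrightarrow> U0 n t = 0" unfolding U0_def by (rule Ufix_head)

lemma conv_split:
  assumes q: "\<And>m. norm (q m) \<le> Cq"
  shows "(\<Sum>\<^sub>\<infinity>k. \<alpha> k * q (n + k)) =
         (\<Sum>\<^sub>\<infinity>k. \<alpha> k * (if N \<le> \<bar>n + k\<bar> then q (n + k) else 0)) + (\<Sum>m\<in>Hd. \<alpha> (m - n) * q m)"
proof -
  let ?u = "\<lambda>j. if N \<le> \<bar>j\<bar> then q j else 0"
  let ?w = "\<lambda>j. if N \<le> \<bar>j\<bar> then 0 else q j"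
  have Cq0: "Cq \<ge> 0" using q[of 0] norm_ge_zero order_trans by blast
  have bu: "norm (?u j) \<le> Cq" for j using q[of j] Cq0 by auto
  have bw: "norm (?w j) \<le> Cq" for j using q[of j] Cq0 by auto
  have "(\<Sum>\<^sub>\<infinity>k. \<alpha> k * q (n + k)) = (\<Sum>\<^sub>\<infinity>k. \<alpha> k * ?u (n + k) + \<alpha> k * ?w (n + k))"
    by (intro infsum_cong) (simp add: distrib_left[symmetric])
  also have "\<dots> = (\<Sum>\<^sub>\<infinity>k. \<alpha> k * ?u (n + k)) + (\<Sum>\<^sub>\<infinity>k. \<alpha> k * ?w (n + k))"
    by (rule infsum_add) (rule summable_au[OF bu], rule summable_au[OF bw])
  also have "(\<Sum>\<^sub>\<infinity>k. \<alpha> k * ?w (n + k)) = (\<Sum>\<^sub>\<infinity>m. \<alpha> (m - n) * ?w m)"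
    using infsum_shift_int[of "\<lambda>m. \<alpha> (m - n) * ?w m" n] by simp
  also have "\<dots> = (\<Sum>m\<in>Hd. \<alpha> (m - n) * ?w m)"
    by (rule infsum_finite_support[OF Hd_finite]) (auto simp: Hd_iff)
  also have "\<dots> = (\<Sum>m\<in>Hd. \<alpha> (m - n) * q m)"
    by (intro sum.cong) (auto simp: Hd_iff)
  finally show ?thesis .
qed

lemma sol_char:
  assumes t: "t \<in> ball 0 r0" and snz: "\<And>n. sig n t \<noteq> 0"
    and q: "\<And>m. norm (q m) \<le> Cq"
    and eq: "\<And>n. q n = - (4 * pi / sig n t) * (\<Sum>\<^sub>\<infinity>k. \<alpha> k * q (n + k)) - c0 / (sig n t * (1 + sig n t))"
  shows "\<And>n. N \<le> \<bar>n\<bar> \<Longrightarrow> q n = U0 n t + (\<Sum>m\<in>Hd. q m * U m n t)"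
    and "\<And>n. n \<in> Hd \<Longrightarrow> (\<Sum>m\<in>Hd. Mx n m t * q m) = bx n t"
proof -
  have Cq0: "Cq \<ge> 0" using q[of 0] norm_ge_zero order_trans by blast
  define u where "u = (\<lambda>j. if N \<le> \<bar>j\<bar> then q j else 0)"
  define V where "V = (\<lambda>j. U0 j t + (\<Sum>m\<in>Hd. q m * U m j t))"
  define CV where "CV = 2 * sqrt (2 * pi) + (\<Sum>m\<in>Hd. Cq * 2)"
  have bu: "norm (u j) \<le> Cq" for j using q[of j] Cq0 by (auto simp: u_def)
  have bV: "norm (V j) \<le> CV" for j
  proof -
    have "norm (V j) \<le> norm (U0 j t) + norm (\<Sum>m\<in>Hd. q m * U m j t)"
      unfolding V_def by (rule norm_triangle_ineq)
    also have "norm (\<Sum>m\<in>Hd. q m * U m j t) \<le> (\<Sum>m\<in>Hd. norm (q m * U m j t))"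
      by (rule norm_sum)
    also have "\<dots> \<le> (\<Sum>m\<in>Hd. Cq * 2)"
      by (intro sum_mono) (simp add: norm_mult mult_mono q U_bound[OF t] Cq0)
    finally show ?thesis unfolding CV_def using U0_bound[OF t, of j] by linarith
  qed
  have hK: "(\<Sum>m\<in>Hd. \<alpha> (m - n) * q m) * (- (4 * pi / sig n t)) = (\<Sum>m\<in>Hd. q m * em m n t)"
    if "N \<le> \<bar>n\<bar>" for n
  proof -
    have "(\<Sum>m\<in>Hd. \<alpha> (m - n) * q m) * (- (4 * pi / sig n t)) = (\<Sum>m\<in>Hd. (\<alpha> (m - n) * q m) * (- (4 * pi / sig n t)))"
      by (rule sum_distrib_right)
    also have "\<dots> = (\<Sum>m\<in>Hd. q m * em m n t)"
      using that by (intro sum.cong) (auto simp: em_def)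
    finally show ?thesis .
  qed
  have ufix: "u n = Kt t u n + ((\<Sum>m\<in>Hd. q m * em m n t) + f0 n t)" if n: "N \<le> \<bar>n\<bar>" for n
  proof -
    have "u n = q n" using n by (simp add: u_def)
    also have "\<dots> = - (4 * pi / sig n t) * ((\<Sum>\<^sub>\<infinity>k. \<alpha> k * u (n + k)) + (\<Sum>m\<in>Hd. \<alpha> (m - n) * q m))
        - c0 / (sig n t * (1 + sig n t))"
      using eq[of n] conv_split[where q = q and Cq = Cq and n = n, OF q] by (simp add: u_def)
    also have "\<dots> = Kt t u n + ((\<Sum>m\<in>Hd. \<alpha> (m - n) * q m) * (- (4 * pi / sig n t))) + f0 n t"
      using n by (simp add: Kt_def f0_def algebra_simps)
    finally show ?thesis using hK[OF n] by simp
  qed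
  have Vfix: "V n = Kt t V n + ((\<Sum>m\<in>Hd. q m * em m n t) + f0 n t)" if n: "N \<le> \<bar>n\<bar>" for n
  proof -
    have K1: "Kt t V n = Kt t (\<lambda>j. U0 j t) n + Kt t (\<lambda>j. \<Sum>m\<in>Hd. q m * U m j t) n"
      unfolding V_def
    proof (rule Kt_add)
      show "norm (U0 j t) \<le> 2 * sqrt (2 * pi)" for j by (rule U0_bound[OF t])
      show "norm (\<Sum>m\<in>Hd. q m * U m j t) \<le> (\<Sum>m\<in>Hd. Cq * 2)" for j
      proof -
        have "norm (\<Sum>m\<in>Hd. q m * U m j t) \<le> (\<Sum>m\<in>Hd. norm (q m * U m j t))" by (rule norm_sum)
        also have "\<dots> \<le> (\<Sum>m\<in>Hd. Cq * 2)"
          by (intro sum_mono) (simp add: norm_mult mult_mono q U_bound[OF t] Cq0)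
        finally show ?thesis .
      qed
    qed
    have K2: "Kt t (\<lambda>j. \<Sum>m\<in>Hd. q m * U m j t) n = (\<Sum>m\<in>Hd. q m * Kt t (\<lambda>j. U m j t) n)"
      by (rule Kt_finsum[OF Hd_finite]) (rule U_bound[OF t])
    have "V n = (Kt t (\<lambda>j. U0 j t) n + f0 n t) + (\<Sum>m\<in>Hd. q m * (Kt t (\<lambda>j. U m j t) n + em m n t))"
      unfolding V_def using U0_fix[OF t n] U_fix[OF t n] by simp
    also have "\<dots> = Kt t V n + ((\<Sum>m\<in>Hd. q m * em m n t) + f0 n t)"
      unfolding K1 K2 by (simp add: distrib_left sum.distrib algebra_simps)
    finally show ?thesis .
  qed
  have uV: "u n = V n" for n
  proof -
    let ?w = "\<lambda>j. u j - V j"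
    have "?w n = 0"
    proof (rule Kt_unique[OF t])
      show "norm (u j - V j) \<le> Cq + CV" for j
        using norm_triangle_ineq4[of "u j" "V j"] bu[of j] bV[of j] by linarith
      show "u j - V j = 0" if "\<not> N \<le> \<bar>j\<bar>" for j
        using that by (simp add: u_def V_def U0_head U_head)
      show "u j - V j = Kt t (\<lambda>j. u j - V j) j" if j: "N \<le> \<bar>j\<bar>" for j
      proof -
        have "Kt t (\<lambda>j. u j + (-1) * V j) j = Kt t u j + Kt t (\<lambda>j. (-1) * V j) j"
          by (rule Kt_add[OF bu, of _ "CV"]) (simp add: bV)
        also have "Kt t (\<lambda>j. (-1) * V j) j = (-1) * Kt t V j" by (rule Kt_cmult)
        finally have "Kt t (\<lambda>j. u j - V j) j = Kt t u j - Kt t V j" by simp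
        then show ?thesis using ufix[OF j] Vfix[OF j] by simp
      qed
    qed
    then show ?thesis by simp
  qed
  show "q n = U0 n t + (\<Sum>m\<in>Hd. q m * U m n t)" if "N \<le> \<bar>n\<bar>" for n
    using uV[of n] that by (simp add: u_def V_def)
  show "(\<Sum>m\<in>Hd. Mx n m t * q m) = bx n t" if n: "n \<in> Hd" for n
  proof -
    have sn: "sig n t \<noteq> 0" by (rule snz)
    have s1: "1 + sig n t \<noteq> 0" by (rule one_plus_sig_nz[OF t])
    define S where "S = (\<Sum>\<^sub>\<infinity>k. \<alpha> k * q (n + k))"
    define SV where "SV = (\<Sum>\<^sub>\<infinity>k. \<alpha> k * V (n + k))"
    define SH where "SH = (\<Sum>m\<in>Hd. \<alpha> (m - n) * q m)"
    define A0 where "A0 = (\<Sum>\<^sub>\<infinity>k. \<alpha> k * U0 (n + k) t)"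
    define SU where "SU = (\<Sum>m\<in>Hd. q m * (\<Sum>\<^sub>\<infinity>k. \<alpha> k * U m (n + k) t))"
    have e1: "sig n t * q n = - (4 * pi) * S - c0 / (1 + sig n t)"
    proof -
      have "sig n t * q n = sig n t * (- (4 * pi / sig n t) * S) - sig n t * (c0 / (sig n t * (1 + sig n t)))"
        unfolding S_def by (subst eq[of n]) (simp only: right_diff_distrib)
      also have "sig n t * (- (4 * pi / sig n t) * S) = - (4 * pi) * S" using sn by simp
      also have "sig n t * (c0 / (sig n t * (1 + sig n t))) = c0 / (1 + sig n t)" using sn by simp
      finally show ?thesis .
    qed
    have e2: "S = SV + SH"
    proof -
      have "(\<lambda>k. \<alpha> k * (if N \<le> \<bar>n + k\<bar> then q (n + k) else 0)) = (\<lambda>k. \<alpha> k * V (n + k))"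
        using uV unfolding u_def by (intro ext) metis
      then show ?thesis unfolding S_def SV_def SH_def
        using conv_split[where q = q and Cq = Cq and n = n, OF q] by simp
    qed
    have e3: "SV = A0 + SU"
    proof -
      have "SV = (\<Sum>\<^sub>\<infinity>k. \<alpha> k * U0 (n + k) t + (\<Sum>m\<in>Hd. q m * (\<alpha> k * U m (n + k) t)))"
        unfolding SV_def V_def by (intro infsum_cong) (simp add: distrib_left sum_distrib_left mult.left_commute)
      also have "\<dots> = (\<Sum>\<^sub>\<infinity>k. \<alpha> k * U0 (n + k) t) + (\<Sum>\<^sub>\<infinity>k. \<Sum>m\<in>Hd. q m * (\<alpha> k * U m (n + k) t))"
      proof (rule infsum_add)
        show "(\<lambda>k. \<alpha> k * U0 (n + k) t) summable_on UNIV" by (rule summable_au[OF U0_bound[OF t]])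
        show "(\<lambda>k. \<Sum>m\<in>Hd. q m * (\<alpha> k * U m (n + k) t)) summable_on UNIV"
          by (rule summable_finsum[OF Hd_finite], rule summable_on_cmult_right, rule summable_au[OF U_bound[OF t]])
      qed
      also have "(\<Sum>\<^sub>\<infinity>k. \<Sum>m\<in>Hd. q m * (\<alpha> k * U m (n + k) t)) = (\<Sum>m\<in>Hd. \<Sum>\<^sub>\<infinity>k. q m * (\<alpha> k * U m (n + k) t))"
        by (rule infsum_finsum[OF Hd_finite], rule summable_on_cmult_right, rule summable_au[OF U_bound[OF t]])
      also have "\<dots> = SU" unfolding SU_def by (simp add: infsum_cmult_right')
      finally show ?thesis unfolding A0_def .
    qed
    have e4: "(\<Sum>m\<in>Hd. Mx n m t * q m) = sig n t * q n + 4 * pi * SH + 4 * pi * SU"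
    proof -
      have "(\<Sum>m\<in>Hd. Mx n m t * q m) = (\<Sum>m\<in>Hd. (if n = m then sig n t * q m else 0)
          + 4 * pi * (\<alpha> (m - n) * q m) + 4 * pi * (q m * (\<Sum>\<^sub>\<infinity>k. \<alpha> k * U m (n + k) t)))"
        by (intro sum.cong refl) (auto simp: Mx_def algebra_simps)
      also have "\<dots> = (\<Sum>m\<in>Hd. (if n = m then sig n t * q m else 0))
          + (\<Sum>m\<in>Hd. 4 * pi * (\<alpha> (m - n) * q m)) + (\<Sum>m\<in>Hd. 4 * pi * (q m * (\<Sum>\<^sub>\<infinity>k. \<alpha> k * U m (n + k) t)))"
        by (simp only: sum.distrib)
      also have "(\<Sum>m\<in>Hd. (if n = m then sig n t * q m else 0)) = sig n t * q n"
        using n Hd_finite by (simp add: sum.delta)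
      finally show ?thesis unfolding SH_def SU_def by (simp only: sum_distrib_left)
    qed
    have "bx n t = - c0 / (1 + sig n t) - 4 * pi * A0" unfolding bx_def A0_def ..
    then show ?thesis unfolding e4 e1 e2 e3 by (simp add: algebra_simps)
  qed
qed

end

lemma summable_finite_support:
  fixes f :: "'a \<Rightarrow> 'b::{comm_monoid_add,topological_space}"
  assumes "finite S" "\<And>x. x \<notin> S \<Longrightarrow> f x = 0"
  shows "f summable_on UNIV"
proof -
  have "f summable_on S" using assms(1) by simp
  then show ?thesis using summable_on_cong_neutral[where S = S and T = UNIV and f = f and g = f] assms(2) by auto
qed

lemma infsum_diff':
  fixes f g :: "'a \<Rightarrow> complex"
  assumes "f summable_on A" "g summable_on A"
  shows "infsum (\<lambda>x. f x - g x) A = infsum f A - infsum g A"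
proof -
  have "infsum (\<lambda>x. f x + (- g x)) A = infsum f A + infsum (\<lambda>x. - g x) A"
    by (rule infsum_add) (use assms summable_on_uminus in auto)
  then show ?thesis by (simp add: infsum_uminus)
qed

lemma summable_finsum_real:
  fixes f :: "'i \<Rightarrow> 'a \<Rightarrow> real"
  assumes "finite I" "\<And>i. i \<in> I \<Longrightarrow> f i summable_on A"
  shows "(\<lambda>x. \<Sum>i\<in>I. f i x) summable_on A"
  using assms
proof (induction I rule: finite_induct)
  case empty then show ?case by simp
next
  case (insert j I)
  have "(\<lambda>x. f j x + (\<Sum>i\<in>I. f i x)) summable_on A"
    by (rule summable_on_add) (use insert in auto)
  then show ?case using insert by simp
qed

lemma infsum_finsum_real:
  fixes f :: "'i \<Rightarrow> 'a \<Rightarrow> real"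
  assumes "finite I" "\<And>i. i \<in> I \<Longrightarrow> f i summable_on A"
  shows "(\<Sum>\<^sub>\<infinity>x\<in>A. \<Sum>i\<in>I. f i x) = (\<Sum>i\<in>I. \<Sum>\<^sub>\<infinity>x\<in>A. f i x)"
  using assms
proof (induction I rule: finite_induct)
  case empty then show ?case by simp
next
  case (insert j I)
  have s: "(\<lambda>x. \<Sum>i\<in>I. f i x) summable_on A" by (rule summable_finsum_real) (use insert in auto)
  have "(\<Sum>\<^sub>\<infinity>x\<in>A. \<Sum>i\<in>insert j I. f i x) = (\<Sum>\<^sub>\<infinity>x\<in>A. f j x + (\<Sum>i\<in>I. f i x))"
    using insert by simp
  also have "\<dots> = (\<Sum>\<^sub>\<infinity>x\<in>A. f j x) + (\<Sum>\<^sub>\<infinity>x\<in>A. \<Sum>i\<in>I. f i x)"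
    by (rule infsum_add) (use insert s in auto)
  finally show ?case using insert by simp
qed

lemma summable_prod_real:
  fixes Ma :: "'a \<Rightarrow> real" and Mb :: "'b \<Rightarrow> real"
  assumes Ma: "Ma summable_on UNIV" and Mb: "Mb summable_on UNIV"
    and nn1: "\<And>x. Ma x \<ge> 0" and nn2: "\<And>y. Mb y \<ge> 0"
  shows "(\<lambda>(x, y). Ma x * Mb y) summable_on (UNIV :: ('a \<times> 'b) set)"
proof (rule nonneg_bdd_above_summable_on)
  show "0 \<le> (case z of (x, y) \<Rightarrow> Ma x * Mb y)" for z using nn1 nn2 by (cases z) auto
  show "bdd_above (sum (\<lambda>(x, y). Ma x * Mb y) ` {F. F \<subseteq> UNIV \<and> finite F})"
  proof (rule bdd_aboveI2)
    fix F :: "('a \<times> 'b) set" assume F: "F \<in> {F. F \<subseteq> UNIV \<and> finite F}"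
    then have fin: "finite F" by simp
    have "sum (\<lambda>(x, y). Ma x * Mb y) F \<le> sum (\<lambda>(x, y). Ma x * Mb y) (fst ` F \<times> snd ` F)"
      by (rule sum_mono2) (use fin nn1 nn2 in \<open>auto intro: mult_nonneg_nonneg simp: rev_image_eqI\<close>)
    also have "\<dots> = sum Ma (fst ` F) * sum Mb (snd ` F)"
      by (simp add: sum_product sum.cartesian_product)
    also have "\<dots> \<le> infsum Ma UNIV * infsum Mb UNIV"
      by (intro mult_mono finite_sum_le_infsum Ma Mb sum_nonneg infsum_nonneg)
         (use nn1 nn2 fin in auto)
    finally show "sum (\<lambda>(x, y). Ma x * Mb y) F \<le> infsum Ma UNIV * infsum Mb UNIV" .
  qed
qed

lemma nonneg_infsum_zero:
  fixes f :: "'a \<Rightarrow> real"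
  assumes "f summable_on UNIV" "\<And>x. f x \<ge> 0" "infsum f UNIV = 0"
  shows "f x = 0"
proof -
  have "sum f {x} \<le> infsum f UNIV" by (rule finite_sum_le_infsum) (use assms in auto)
  then show ?thesis using assms(2)[of x] assms(3) by simp
qed

lemma cs_infsum:
  fixes w z :: "'i \<Rightarrow> real"
  assumes w: "w summable_on UNIV" and w0: "\<And>k. w k \<ge> 0" and z: "\<And>k. \<bar>z k\<bar> \<le> Z"
  shows "(\<Sum>\<^sub>\<infinity>k. w k * z k)^2 \<le> (\<Sum>\<^sub>\<infinity>k. w k) * (\<Sum>\<^sub>\<infinity>k. w k * (z k)^2)"
proof -
  have Z0: "Z \<ge> 0" using z[of undefined] by linarith
  have s1: "(\<lambda>k. w k * z k) summable_on UNIV"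
    by (rule summable_bound(1)[of "\<lambda>k. w k * Z"]) (use summable_on_cmult_left[OF w] w0 z in \<open>auto simp: abs_mult intro: mult_left_mono\<close>)
  have s2: "(\<lambda>k. w k * (z k)^2) summable_on UNIV"
  proof (rule summable_bound(1)[of "\<lambda>k. w k * Z^2"])
    show "(\<lambda>k. w k * Z^2) summable_on UNIV" by (rule summable_on_cmult_left[OF w])
    show "norm (w k * (z k)^2) \<le> w k * Z^2" for k
    proof -
      have "\<bar>z k\<bar>^2 \<le> Z^2" by (rule power_mono) (use z in auto)
      then have "(z k)^2 \<le> Z^2" by simp
      then show ?thesis using w0[of k] by (simp add: abs_mult mult_left_mono)
    qed
  qed
  define W where "W = (\<Sum>\<^sub>\<infinity>k. w k)"
  define S1 where "S1 = (\<Sum>\<^sub>\<infinity>k. w k * z k)"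
  define S2 where "S2 = (\<Sum>\<^sub>\<infinity>k. w k * (z k)^2)"
  have hW: "(w has_sum W) UNIV" using w W_def by (simp add: summable_iff_has_sum_infsum)
  have h1: "((\<lambda>k. w k * z k) has_sum S1) UNIV" using s1 S1_def by (simp add: summable_iff_has_sum_infsum)
  have h2: "((\<lambda>k. w k * (z k)^2) has_sum S2) UNIV" using s2 S2_def by (simp add: summable_iff_has_sum_infsum)
  have W0: "W \<ge> 0" by (rule has_sum_nonneg[OF hW]) (use w0 in auto)
  show ?thesis unfolding W_def[symmetric] S1_def[symmetric] S2_def[symmetric]
  proof (cases "W = 0")
    case True
    have "\<bar>S1\<bar> \<le> W * Z"
    proof -
      have "norm S1 \<le> (\<Sum>\<^sub>\<infinity>k. w k * Z)" unfolding S1_def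
        by (rule norm_infsum_bound_M) (use summable_on_cmult_left[OF w] w0 z in \<open>auto simp: abs_mult intro: mult_left_mono\<close>)
      also have "\<dots> = W * Z" unfolding W_def by (rule infsum_cmult_left') 
      finally show ?thesis by simp
    qed
    then have "S1 = 0" using True by simp
    then show "S1^2 \<le> W * S2" using True by simp
  next
    case False
    then have Wp: "W > 0" using W0 by simp
    define m where "m = S1 / W"
    have "((\<lambda>k. w k * (z k)^2 + (- 2 * m) * (w k * z k) + m^2 * w k) has_sum (S2 + (- 2 * m) * S1 + m^2 * W)) UNIV"
      by (intro has_sum_add has_sum_cmult_right h1 h2 hW)
    moreover have "w k * (z k)^2 + (- 2 * m) * (w k * z k) + m^2 * w k = w k * (z k - m)^2" for k
      by (simp add: power2_eq_square algebra_simps)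
    ultimately have "((\<lambda>k. w k * (z k - m)^2) has_sum (S2 + (- 2 * m) * S1 + m^2 * W)) UNIV" by simp
    then have "S2 + (- 2 * m) * S1 + m^2 * W \<ge> 0" by (rule has_sum_nonneg) (use w0 in simp)
    moreover have "S2 + (- 2 * m) * S1 + m^2 * W = S2 - S1^2 / W"
      unfolding m_def using Wp by (simp add: power2_eq_square field_simps)
    ultimately have "S1^2 / W \<le> S2" by simp
    then show "S1^2 \<le> W * S2" using Wp by (simp add: divide_le_eq mult.commute)
  qed
qed

definition l2b :: "(int \<Rightarrow> complex) \<Rightarrow> real \<Rightarrow> bool" where
  "l2b v B \<longleftrightarrow> (\<forall>F. finite F \<longrightarrow> L2_set (\<lambda>n. norm (v n)) F \<le> B)"

lemma l2b_nonneg: "l2b v B \<Longrightarrow> B \<ge> 0"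
  unfolding l2b_def by (metis L2_set_empty finite.emptyI)

lemma l2b_bound: "l2b v B \<Longrightarrow> norm (v n) \<le> B"
  unfolding l2b_def using member_le_L2_set[of "{n}" n "\<lambda>n. norm (v n)"] by force

lemma l2b_summable: "l2b v B \<Longrightarrow> (\<lambda>n. (norm (v n))^2) summable_on UNIV"
proof (rule nonneg_bdd_above_summable_on)
  assume l: "l2b v B"
  show "bdd_above (sum (\<lambda>n. (norm (v n))^2) ` {F. F \<subseteq> UNIV \<and> finite F})"
  proof (rule bdd_aboveI2)
    fix F :: "int set" assume "F \<in> {F. F \<subseteq> UNIV \<and> finite F}"
    then have fin: "finite F" by simp
    have "L2_set (\<lambda>n. norm (v n)) F \<le> B" using l fin by (simp add: l2b_def)
    then have "(L2_set (\<lambda>n. norm (v n)) F)^2 \<le> B^2" by (intro power_mono) auto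
    moreover have "(L2_set (\<lambda>n. norm (v n)) F)^2 = (\<Sum>n\<in>F. (norm (v n))^2)"
      unfolding L2_set_def by (simp add: sum_nonneg)
    ultimately show "(\<Sum>n\<in>F. (norm (v n))^2) \<le> B^2" by simp
  qed
qed simp

lemma l2b_mono:
  assumes "\<And>n. norm (u n) \<le> c * norm (v n)" "c \<ge> 0" "l2b v B"
  shows "l2b u (c * B)"
  unfolding l2b_def
proof (intro allI impI)
  fix F :: "int set" assume fin: "finite F"
  have "L2_set (\<lambda>n. norm (u n)) F \<le> L2_set (\<lambda>n. c * norm (v n)) F"
    by (rule L2_set_mono) (use assms in auto)
  also have "\<dots> = c * L2_set (\<lambda>n. norm (v n)) F" by (rule L2_set_right_distrib[symmetric]) fact
  also have "\<dots> \<le> c * B" using assms fin by (intro mult_left_mono) (auto simp: l2b_def)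
  finally show "L2_set (\<lambda>n. norm (u n)) F \<le> c * B" .
qed

lemma l2b_weaken: "l2b v A \<Longrightarrow> A \<le> B \<Longrightarrow> l2b v B"
  unfolding l2b_def by force

lemma l2b_add:
  assumes "l2b u A" "l2b v B"
  shows "l2b (\<lambda>n. u n + v n) (A + B)"
  unfolding l2b_def
proof (intro allI impI)
  fix F :: "int set" assume fin: "finite F"
  have "L2_set (\<lambda>n. norm (u n + v n)) F \<le> L2_set (\<lambda>n. norm (u n) + norm (v n)) F"
    by (rule L2_set_mono) (auto intro: norm_triangle_ineq)
  also have "\<dots> \<le> L2_set (\<lambda>n. norm (u n)) F + L2_set (\<lambda>n. norm (v n)) F"
    by (rule L2_set_triangle_ineq)
  also have "\<dots> \<le> A + B" using assms fin by (intro add_mono) (auto simp: l2b_def)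
  finally show "L2_set (\<lambda>n. norm (u n + v n)) F \<le> A + B" .
qed

lemma l2b_zero: "l2b (\<lambda>n. 0) 0"
  unfolding l2b_def by (simp add: L2_set_0')

lemma l2b_finsum:
  assumes "finite I" "\<And>i. i \<in> I \<Longrightarrow> l2b (u i) (B i)"
  shows "l2b (\<lambda>n. \<Sum>i\<in>I. u i n) (\<Sum>i\<in>I. B i)"
  using assms
proof (induction I rule: finite_induct)
  case empty then show ?case by (simp add: l2b_zero)
next
  case (insert j I)
  have "l2b (\<lambda>n. u j n + (\<Sum>i\<in>I. u i n)) (B j + (\<Sum>i\<in>I. B i))"
    by (rule l2b_add) (use insert in auto)
  then show ?case using insert by simp
qed

lemma l2b_finsupp:
  assumes S: "finite S" and z: "\<And>n. n \<notin> S \<Longrightarrow> v n = 0"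
  shows "l2b v (\<Sum>n\<in>S. norm (v n))"
  unfolding l2b_def
proof (intro allI impI)
  fix F :: "int set" assume fin: "finite F"
  have "L2_set (\<lambda>n. norm (v n)) F \<le> (\<Sum>n\<in>F. \<bar>norm (v n)\<bar>)" by (rule L2_set_le_sum_abs)
  also have "\<dots> = (\<Sum>n\<in>F. norm (v n))" by simp
  also have "\<dots> \<le> (\<Sum>n\<in>F \<union> S. norm (v n))" by (rule sum_mono2) (use fin S in auto)
  also have "\<dots> = (\<Sum>n\<in>S. norm (v n))" by (rule sum.mono_neutral_right) (use fin S z in auto)
  finally show "L2_set (\<lambda>n. norm (v n)) F \<le> (\<Sum>n\<in>S. norm (v n))" .
qed

lemma l2b_limit:
  assumes lim: "\<And>n. (\<lambda>J. P J n) \<longlonglongrightarrow> v n" and b: "\<And>J. l2b (P J) B"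
  shows "l2b v B"
  unfolding l2b_def
proof (intro allI impI)
  fix F :: "int set" assume fin: "finite F"
  have "(\<lambda>J. L2_set (\<lambda>n. norm (P J n)) F) \<longlonglongrightarrow> L2_set (\<lambda>n. norm (v n)) F"
    unfolding L2_set_def by (intro tendsto_intros lim)
  then show "L2_set (\<lambda>n. norm (v n)) F \<le> B"
    by (rule LIMSEQ_le_const2) (use b fin in \<open>auto simp: l2b_def\<close>)
qed

lemma shiftT_pow: "(shiftT ^^ j) a m = a (m + j)"
  by (induction j arbitrary: m) (simp_all add: shiftT_def)

lemma gen_zero:
  fixes \<alpha> :: "int \<Rightarrow> complex" and v :: "nat \<Rightarrow> complex"
  assumes gen: "generic \<alpha>" and asum: "(\<lambda>k. norm (\<alpha> k)) summable_on UNIV"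
    and vb: "\<And>m. norm (v m) \<le> C"
    and orth: "\<And>j. (\<Sum>\<^sub>\<infinity>m. \<alpha> (int m + int j + 1) * v m) = 0"
  shows "v 0 = 0"
proof -
  have C0: "C \<ge> 0" using vb[of 0] norm_ge_zero order_trans by blast
  have bs: "(\<lambda>m. norm (\<alpha> (int m + int j + 1))) summable_on (UNIV :: nat set)" for j
  proof -
    have inj: "inj_on (\<lambda>m::nat. int m + int j + 1) UNIV" by (auto simp: inj_on_def)
    have "(\<lambda>k. norm (\<alpha> k)) summable_on ((\<lambda>m::nat. int m + int j + 1) ` UNIV)"
      using asum summable_on_subset_banach by blast
    then show ?thesis using summable_on_reindex[OF inj, of "\<lambda>k. norm (\<alpha> k)"] by (simp add: o_def)
  qed
  have small: "norm (v 0) \<le> C * e" if e: "e > 0" for e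
  proof -
    obtain Nb b where lb: "l1norm (\<lambda>m. e1 m - (\<Sum>j<Nb. b j * (shiftT ^^ j) (alpha_tilde \<alpha>) m)) < e"
      using gen e unfolding generic_def by blast
    define w where "w = (\<lambda>m. e1 m - (\<Sum>j<Nb. b j * \<alpha> (int m + int j + 1)))"
    have wdef: "(\<lambda>m. e1 m - (\<Sum>j<Nb. b j * (shiftT ^^ j) (alpha_tilde \<alpha>) m)) = w"
      unfolding w_def by (intro ext) (simp add: shiftT_pow alpha_tilde_def add.assoc)
    have se1: "(\<lambda>m. e1 m * v m) summable_on UNIV"
      by (rule summable_finite_support[of "{0}"]) (auto simp: e1_def)
    have ie1: "(\<Sum>\<^sub>\<infinity>m. e1 m * v m) = v 0"
    proof -
      have "(\<Sum>\<^sub>\<infinity>m. e1 m * v m) = (\<Sum>\<^sub>\<infinity>m\<in>{0::nat}. e1 m * v m)"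
        by (rule infsum_cong_neutral) (auto simp: e1_def)
      then show ?thesis by (simp add: e1_def)
    qed
    have sj: "(\<lambda>m. b j * (\<alpha> (int m + int j + 1) * v m)) summable_on UNIV" for j
    proof (rule summable_on_cmult_right, rule summable_bound(1)[of "\<lambda>m. norm (\<alpha> (int m + int j + 1)) * C"])
      show "(\<lambda>m. norm (\<alpha> (int m + int j + 1)) * C) summable_on UNIV" by (rule summable_on_cmult_left[OF bs])
      show "norm (\<alpha> (int m + int j + 1) * v m) \<le> norm (\<alpha> (int m + int j + 1)) * C" for m
        unfolding norm_mult by (rule mult_left_mono[OF vb]) simp
    qed
    have sS: "(\<lambda>m. \<Sum>j<Nb. b j * (\<alpha> (int m + int j + 1) * v m)) summable_on UNIV"
      by (rule summable_finsum) (use sj in auto)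
    have iS: "(\<Sum>\<^sub>\<infinity>m. \<Sum>j<Nb. b j * (\<alpha> (int m + int j + 1) * v m)) = 0"
    proof -
      have "(\<Sum>\<^sub>\<infinity>m. \<Sum>j<Nb. b j * (\<alpha> (int m + int j + 1) * v m)) = (\<Sum>j<Nb. \<Sum>\<^sub>\<infinity>m. b j * (\<alpha> (int m + int j + 1) * v m))"
        by (rule infsum_finsum) (use sj in auto)
      also have "\<dots> = (\<Sum>j<Nb. b j * (\<Sum>\<^sub>\<infinity>m. \<alpha> (int m + int j + 1) * v m))"
        by (simp add: infsum_cmult_right')
      also have "\<dots> = 0" using orth by simp
      finally show ?thesis .
    qed
    have wv: "(\<lambda>m. w m * v m) = (\<lambda>m. e1 m * v m - (\<Sum>j<Nb. b j * (\<alpha> (int m + int j + 1) * v m)))"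
      unfolding w_def by (intro ext) (simp add: left_diff_distrib sum_distrib_right mult.assoc)
    have "(\<Sum>\<^sub>\<infinity>m. w m * v m) = v 0 - 0"
      unfolding wv by (subst infsum_diff'[OF se1 sS]) (simp add: ie1 iS)
    then have v0: "v 0 = (\<Sum>\<^sub>\<infinity>m. w m * v m)" by simp
    have wsum: "summable (\<lambda>m. norm (w m))"
    proof -
      have "(\<lambda>m. norm (e1 m) + (\<Sum>j<Nb. norm (b j) * norm (\<alpha> (int m + int j + 1)))) summable_on UNIV"
      proof (rule summable_on_add)
        show "(\<lambda>m. norm (e1 m)) summable_on UNIV"
          by (rule summable_finite_support[of "{0}"]) (auto simp: e1_def)
        show "(\<lambda>m. \<Sum>j<Nb. norm (b j) * norm (\<alpha> (int m + int j + 1))) summable_on UNIV"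
          by (rule summable_finsum_real) (use bs summable_on_cmult_right in auto)
      qed
      then have "(\<lambda>m. norm (w m)) summable_on UNIV"
      proof (rule summable_on_comparison_test)
        show "norm (w m) \<le> norm (e1 m) + (\<Sum>j<Nb. norm (b j) * norm (\<alpha> (int m + int j + 1)))" for m
        proof -
          have "norm (w m) \<le> norm (e1 m) + norm (\<Sum>j<Nb. b j * \<alpha> (int m + int j + 1))"
            unfolding w_def by (rule norm_triangle_ineq4)
          also have "norm (\<Sum>j<Nb. b j * \<alpha> (int m + int j + 1)) \<le> (\<Sum>j<Nb. norm (b j) * norm (\<alpha> (int m + int j + 1)))"
            using norm_sum[of "\<lambda>j. b j * \<alpha> (int m + int j + 1)" "{..<Nb}"] by (simp add: norm_mult)
          finally show ?thesis by simp
        qed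
      qed simp
      then show ?thesis by (rule summable_on_imp_summable)
    qed
    have "norm (v 0) \<le> (\<Sum>\<^sub>\<infinity>m. norm (w m) * C)"
      unfolding v0 by (rule norm_infsum_bound_M) (use summable_on_cmult_left summable_nonneg_imp_summable_on[OF wsum] vb in \<open>auto simp: norm_mult intro: mult_left_mono\<close>)
    also have "\<dots> = (\<Sum>\<^sub>\<infinity>m. norm (w m)) * C" by (rule infsum_cmult_left')
    also have "(\<Sum>\<^sub>\<infinity>m. norm (w m)) = l1norm w"
    proof -
      have "((\<lambda>m. norm (w m)) has_sum (\<Sum>m. norm (w m))) UNIV"
        by (rule sums_nonneg_imp_has_sum) (use wsum summable_sums in auto)
      then show ?thesis unfolding l1norm_def by (simp add: has_sum_iff)
    qed
    also have "l1norm w * C \<le> e * C" using lb wdef C0 by (intro mult_right_mono) auto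
    finally show ?thesis by (simp add: mult.commute)
  qed
  have "norm (v 0) \<le> 0"
  proof (rule ccontr)
    assume "\<not> norm (v 0) \<le> 0"
    then have p: "norm (v 0) > 0" by simp
    define e where "e = norm (v 0) / (2 * (C + 1))"
    have ep: "e > 0" using p C0 by (simp add: e_def)
    have "norm (v 0) \<le> C * e" by (rule small[OF ep])
    also have "C * e < norm (v 0)"
    proof -
      have "C * e = norm (v 0) * (C / (2 * (C + 1)))" by (simp add: e_def)
      also have "C / (2 * (C + 1)) < 1" using C0 by (simp add: divide_less_eq)
      then have "norm (v 0) * (C / (2 * (C + 1))) < norm (v 0) * 1" by (intro mult_strict_left_mono p)
      finally show ?thesis by simp
    qed
    finally show False by simp
  qed
  then show ?thesis by simp
qed

lemma gen_all:
  fixes \<alpha> q :: "int \<Rightarrow> complex"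
  assumes gen: "generic \<alpha>" and asum: "(\<lambda>k. norm (\<alpha> k)) summable_on UNIV"
    and qb: "\<And>m. norm (q m) \<le> C"
    and neg: "\<And>n. n < 0 \<Longrightarrow> q n = 0"
    and row: "\<And>n. q n = 0 \<Longrightarrow> (\<Sum>\<^sub>\<infinity>k. \<alpha> k * q (n + k)) = 0"
  shows "q n = 0"
proof -
  have ind: "\<forall>i<k. q (int i) = 0" for k :: nat
  proof (induction k)
    case 0 then show ?case by simp
  next
    case (Suc k)
    have below: "q n = 0" if "n < int k" for n
    proof (cases "n < 0")
      case True then show ?thesis by (rule neg)
    next
      case False
      then have e: "n = int (nat n)" by simp
      have "nat n < k" using that False by simp
      then have "q (int (nat n)) = 0" using Suc.IH by blast
      then show ?thesis using e by simp
    qed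
    define v where "v = (\<lambda>m::nat. q (int m + int k))"
    have "v 0 = 0"
    proof (rule gen_zero[OF gen asum])
      show "norm (v m) \<le> C" for m unfolding v_def by (rule qb)
      fix j :: nat
      define n0 where "n0 = int k - int j - 1"
      have "q n0 = 0" by (rule below) (simp add: n0_def)
      then have r: "(\<Sum>\<^sub>\<infinity>k'. \<alpha> k' * q (n0 + k')) = 0" by (rule row)
      define g where "g = (\<lambda>m::nat. int m + int k)"
      have inj: "inj_on g UNIV" by (auto simp: g_def inj_on_def)
      have "(\<Sum>\<^sub>\<infinity>k'. \<alpha> k' * q (n0 + k')) = (\<Sum>\<^sub>\<infinity>i. \<alpha> (i - n0) * q i)"
        using infsum_shift_int[of "\<lambda>i. \<alpha> (i - n0) * q i" n0] by simp
      also have "\<dots> = (\<Sum>\<^sub>\<infinity>i\<in>range g. \<alpha> (i - n0) * q i)"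
      proof (rule infsum_cong_neutral)
        show "\<alpha> (i - n0) * q i = 0" if "i \<in> UNIV - range g" for i
        proof -
          have "i < int k"
          proof (rule ccontr)
            assume "\<not> i < int k"
            then have "i = g (nat (i - int k))" by (simp add: g_def)
            then show False using that by auto
          qed
          then show ?thesis using below by simp
        qed
      qed auto
      also have "\<dots> = (\<Sum>\<^sub>\<infinity>m. \<alpha> (g m - n0) * q (g m))"
        using infsum_reindex[OF inj, of "\<lambda>i. \<alpha> (i - n0) * q i"] by (simp add: o_def)
      also have "\<dots> = (\<Sum>\<^sub>\<infinity>m. \<alpha> (int m + int j + 1) * v m)"
        by (intro infsum_cong) (simp add: g_def n0_def v_def algebra_simps)
      finally show "(\<Sum>\<^sub>\<infinity>m. \<alpha> (int m + int j + 1) * v m) = 0" using r by simp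
    qed
    then have "q (int k) = 0" by (simp add: v_def)
    then show ?case using Suc by (auto simp: less_Suc_eq)
  qed
  show ?thesis
  proof (cases "n < 0")
    case True then show ?thesis by (rule neg)
  next
    case False
    then have "n = int (nat n)" by simp
    moreover have "nat n < Suc (nat n)" by simp
    ultimately show ?thesis using ind[of "Suc (nat n)"] by metis
  qed
qed

context setting
begin

lemma young:
  assumes l: "l2b v B"
  shows "l2b (\<lambda>n. \<Sum>\<^sub>\<infinity>k. \<alpha> k * v (n + k)) (a * B)"
  unfolding l2b_def
proof (intro allI impI)
  fix F :: "int set" assume fin: "finite F"
  have B0: "B \<ge> 0" by (rule l2b_nonneg[OF l])
  have vb: "norm (v m) \<le> B" for m by (rule l2b_bound[OF l])
  let ?T = "\<lambda>n. \<Sum>\<^sub>\<infinity>k. norm (\<alpha> k) * norm (v (n + k))"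
  let ?S = "\<lambda>n. \<Sum>\<^sub>\<infinity>k. norm (\<alpha> k) * (norm (v (n + k)))^2"
  have sq: "(norm (\<Sum>\<^sub>\<infinity>k. \<alpha> k * v (n + k)))^2 \<le> a * ?S n" for n
  proof -
    have sT: "(\<lambda>k. norm (\<alpha> k) * norm (v (n + k))) summable_on UNIV"
      by (rule summable_bound(1)[of "\<lambda>k. norm (\<alpha> k) * B"]) (use summable_on_cmult_left[OF asum] vb in \<open>auto intro: mult_left_mono\<close>)
    have "norm (\<Sum>\<^sub>\<infinity>k. \<alpha> k * v (n + k)) \<le> ?T n"
      by (rule norm_infsum_bound_M[OF sT]) (simp add: norm_mult)
    then have "(norm (\<Sum>\<^sub>\<infinity>k. \<alpha> k * v (n + k)))^2 \<le> (?T n)^2" by (intro power_mono) auto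
    also have "\<dots> \<le> (\<Sum>\<^sub>\<infinity>k. norm (\<alpha> k)) * ?S n"
      by (rule cs_infsum[OF asum]) (use vb in auto)
    finally show ?thesis by (simp add: a_def)
  qed
  have sS: "(\<lambda>k. norm (\<alpha> k) * (norm (v (n + k)))^2) summable_on UNIV" for n
  proof (rule summable_bound(1)[of "\<lambda>k. norm (\<alpha> k) * B^2"])
    show "(\<lambda>k. norm (\<alpha> k) * B^2) summable_on UNIV" by (rule summable_on_cmult_left[OF asum])
    show "norm (norm (\<alpha> k) * (norm (v (n + k)))^2) \<le> norm (\<alpha> k) * B^2" for k
      using vb[of "n + k"] by (simp add: mult_left_mono power_mono)
  qed
  have inner: "(\<Sum>n\<in>F. (norm (v (n + k)))^2) \<le> B^2" for k
  proof -
    have inj: "inj_on (\<lambda>n. n + k) F" by (auto simp: inj_on_def)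
    have "(\<Sum>n\<in>F. (norm (v (n + k)))^2) = (\<Sum>m\<in>(\<lambda>n. n + k) ` F. (norm (v m))^2)"
      using sum.reindex[OF inj, of "\<lambda>m. (norm (v m))^2"] by simp
    also have "\<dots> = (L2_set (\<lambda>m. norm (v m)) ((\<lambda>n. n + k) ` F))^2"
      unfolding L2_set_def by (simp add: sum_nonneg)
    also have "\<dots> \<le> B^2"
      using l fin by (intro power_mono) (auto simp: l2b_def)
    finally show ?thesis .
  qed
  have c1: "(\<Sum>n\<in>F. (norm (\<Sum>\<^sub>\<infinity>k. \<alpha> k * v (n + k)))^2) \<le> a * (\<Sum>n\<in>F. ?S n)"
  proof -
    have "(\<Sum>n\<in>F. (norm (\<Sum>\<^sub>\<infinity>k. \<alpha> k * v (n + k)))^2) \<le> (\<Sum>n\<in>F. a * ?S n)"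
      by (rule sum_mono) (rule sq)
    then show ?thesis by (simp add: sum_distrib_left)
  qed
  have c2: "(\<Sum>n\<in>F. ?S n) = (\<Sum>\<^sub>\<infinity>k. norm (\<alpha> k) * (\<Sum>n\<in>F. (norm (v (n + k)))^2))"
  proof -
    have "(\<Sum>n\<in>F. ?S n) = (\<Sum>\<^sub>\<infinity>k. \<Sum>n\<in>F. norm (\<alpha> k) * (norm (v (n + k)))^2)"
      by (rule infsum_finsum_real[symmetric, OF fin]) (rule sS)
    then show ?thesis by (simp add: sum_distrib_left)
  qed
  have c3: "(\<Sum>\<^sub>\<infinity>k. norm (\<alpha> k) * (\<Sum>n\<in>F. (norm (v (n + k)))^2)) \<le> (\<Sum>\<^sub>\<infinity>k. norm (\<alpha> k) * B^2)"
  proof (rule infsum_mono)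
    show "(\<lambda>k. norm (\<alpha> k) * (\<Sum>n\<in>F. (norm (v (n + k)))^2)) summable_on UNIV"
      by (rule summable_bound(1)[of "\<lambda>k. norm (\<alpha> k) * B^2"])
         (use summable_on_cmult_left[OF asum] inner in \<open>auto simp: sum_nonneg intro: mult_left_mono\<close>)
    show "(\<lambda>k. norm (\<alpha> k) * B^2) summable_on UNIV" by (rule summable_on_cmult_left[OF asum])
    show "norm (\<alpha> k) * (\<Sum>n\<in>F. (norm (v (n + k)))^2) \<le> norm (\<alpha> k) * B^2" for k
      by (rule mult_left_mono[OF inner]) simp
  qed
  have c4: "(\<Sum>\<^sub>\<infinity>k. norm (\<alpha> k) * B^2) = a * B^2" unfolding a_def by (rule infsum_cmult_left')
  have "a * (\<Sum>n\<in>F. ?S n) \<le> a * (a * B^2)"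
    using c2 c3 c4 a_nonneg by (simp add: mult_left_mono)
  also have "a * (a * B^2) = (a * B)^2" by (simp add: power2_eq_square)
  finally have "(\<Sum>n\<in>F. (norm (\<Sum>\<^sub>\<infinity>k. \<alpha> k * v (n + k)))^2) \<le> (a * B)^2"
    using c1 by linarith
  then have "sqrt (\<Sum>n\<in>F. (norm (\<Sum>\<^sub>\<infinity>k. \<alpha> k * v (n + k)))^2) \<le> sqrt ((a * B)^2)"
    by (rule real_sqrt_le_mono)
  then show "L2_set (\<lambda>n. norm (\<Sum>\<^sub>\<infinity>k. \<alpha> k * v (n + k))) F \<le> a * B"
    unfolding L2_set_def using a_nonneg B0 by simp
qed

lemma Kt_l2:
  assumes t: "t \<in> ball 0 r0" and l: "l2b u B"
  shows "l2b (\<lambda>n. Kt t u n) (B / 2)"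
proof -
  have "l2b (\<lambda>n. Kt t u n) ((1 / (2 * (a + 1))) * (a * B))"
  proof (rule l2b_mono[OF _ _ young[OF l]])
    show "0 \<le> 1 / (2 * (a + 1))" using a_nonneg by simp
    show "norm (Kt t u n) \<le> 1 / (2 * (a + 1)) * norm (\<Sum>\<^sub>\<infinity>k. \<alpha> k * u (n + k))" for n
    proof (cases "N \<le> \<bar>n\<bar>")
      case False then show ?thesis using a_nonneg by (simp add: Kt_def)
    next
      case True
      have s: "8 * pi * (a + 1) \<le> norm (sig n t)" by (rule sig_tail[OF t True])
      have p: "0 < 8 * pi * (a + 1)" using a_nonneg by (simp add: add_nonneg_pos)
      have sp: "0 < norm (sig n t)" using p s by linarith
      have "4 * pi / norm (sig n t) \<le> 4 * pi / (8 * pi * (a + 1))"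
        by (rule divide_left_mono[OF s]) (use mult_pos_pos[OF sp p] in auto)
      also have "\<dots> = 1 / (2 * (a + 1))"
      proof -
        have nz: "a + 1 \<noteq> 0" using a_nonneg by simp
        have e: "8 * pi * (a + 1) = (4 * pi) * (2 * (a + 1))" by simp
        have "4 * pi / (8 * pi * (a + 1)) = (4 * pi) / ((4 * pi) * (2 * (a + 1)))" unfolding e by (rule refl)
        also have "\<dots> = ((4 * pi) / (4 * pi)) / (2 * (a + 1))" by (rule divide_divide_eq_left[symmetric])
        also have "(4 * pi) / (4 * pi) = (1::real)" by simp
        finally show ?thesis .
      qed
      finally have c: "4 * pi / norm (sig n t) \<le> 1 / (2 * (a + 1))" .
      have "norm (Kt t u n) = 4 * pi / norm (sig n t) * norm (\<Sum>\<^sub>\<infinity>k. \<alpha> k * u (n + k))"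
        using True by (simp add: Kt_def norm_mult norm_divide)
      also have "\<dots> \<le> 1 / (2 * (a + 1)) * norm (\<Sum>\<^sub>\<infinity>k. \<alpha> k * u (n + k))"
        by (rule mult_right_mono[OF c]) simp
      finally show ?thesis .
    qed
  qed
  moreover have "(1 / (2 * (a + 1))) * (a * B) \<le> B / 2"
  proof -
    have B0: "B \<ge> 0" by (rule l2b_nonneg[OF l])
    have "a * B \<le> (a + 1) * B" using B0 by (simp add: mult_right_mono)
    then show ?thesis using a_nonneg by (simp add: field_simps)
  qed
  ultimately show ?thesis by (rule l2b_weaken)
qed

lemma Fj_l2:
  assumes h: "\<And>n t. t \<in> ball 0 r0 \<Longrightarrow> norm (h n t) \<le> C" and C0: "C \<ge> 0" and t: "t \<in> ball 0 r0"
    and l: "l2b (\<lambda>n. h n t) B"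
  shows "l2b (\<lambda>n. Fj h j n t) (B / 2^j)"
proof (induction j)
  case 0
  have "l2b (\<lambda>n. Fj h 0 n t) (1 * B)" by (rule l2b_mono[OF _ _ l]) auto
  then show ?case by simp
next
  case (Suc j)
  have "l2b (\<lambda>n. Kt t (\<lambda>m. Fj h j m t) n) ((B / 2^j) / 2)" by (rule Kt_l2[OF t Suc])
  then show ?case by (simp add: mult.commute)
qed

lemma Ufix_l2:
  assumes h: "\<And>n t. t \<in> ball 0 r0 \<Longrightarrow> norm (h n t) \<le> C" and C0: "C \<ge> 0" and t: "t \<in> ball 0 r0"
    and l: "l2b (\<lambda>n. h n t) B"
  shows "l2b (\<lambda>n. Ufix h n t) (2 * B)"
proof (rule l2b_limit)
  have B0: "B \<ge> 0" by (rule l2b_nonneg[OF l])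
  show "(\<lambda>J. \<Sum>j<J. Fj h j n t) \<longlonglongrightarrow> Ufix h n t" for n
  proof -
    have "((\<lambda>j. Fj h j n t) has_sum Ufix h n t) UNIV"
      unfolding Ufix_def using Fj_summable[OF h C0 t] by (simp add: summable_iff_has_sum_infsum)
    then have "(\<lambda>j. Fj h j n t) sums Ufix h n t" by (rule has_sum_imp_sums)
    then show ?thesis by (simp add: sums_def)
  qed
  show "l2b (\<lambda>n. \<Sum>j<J. Fj h j n t) (2 * B)" for J
  proof (rule l2b_weaken)
    show "l2b (\<lambda>n. \<Sum>j<J. Fj h j n t) (\<Sum>j<J. B / 2^j)"
      by (rule l2b_finsum) (use Fj_l2[where h = h, OF h C0 t l] in auto)
    have g: "((\<lambda>j::nat. B / 2^j) has_sum (2 * B)) UNIV" by (rule geom_has_sum[OF B0])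
    have "(\<Sum>j<J. B / 2^j) \<le> (\<Sum>\<^sub>\<infinity>j. B / 2^j)"
      by (rule finite_sum_le_infsum) (use g B0 in \<open>auto simp: has_sum_iff\<close>)
    then show "(\<Sum>j<J. B / 2^j) \<le> 2 * B" using g by (simp add: has_sum_iff)
  qed
qed

lemma alpha_l2: "l2b (\<lambda>n. \<alpha> (m - n)) a"
  unfolding l2b_def
proof (intro allI impI)
  fix F :: "int set" assume fin: "finite F"
  have inj: "inj_on (\<lambda>n. m - n) F" by (auto simp: inj_on_def)
  have s1: "(\<Sum>n\<in>F. norm (\<alpha> (m - n))) \<le> a"
  proof -
    have "(\<Sum>n\<in>F. norm (\<alpha> (m - n))) = (\<Sum>k\<in>(\<lambda>n. m - n) ` F. norm (\<alpha> k))"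
      using sum.reindex[OF inj, of "\<lambda>k. norm (\<alpha> k)"] by simp
    also have "\<dots> \<le> a" unfolding a_def by (rule finite_sum_le_infsum) (use fin asum in auto)
    finally show ?thesis .
  qed
  have "(\<Sum>n\<in>F. (norm (\<alpha> (m - n)))^2) \<le> (\<Sum>n\<in>F. a * norm (\<alpha> (m - n)))"
    by (rule sum_mono) (simp add: power2_eq_square mult_right_mono alpha_le_a)
  also have "\<dots> = a * (\<Sum>n\<in>F. norm (\<alpha> (m - n)))" by (simp add: sum_distrib_left)
  also have "\<dots> \<le> a * a" by (rule mult_left_mono[OF s1 a_nonneg])
  finally have "(\<Sum>n\<in>F. (norm (\<alpha> (m - n)))^2) \<le> a^2" by (simp add: power2_eq_square)
  then have "sqrt (\<Sum>n\<in>F. (norm (\<alpha> (m - n)))^2) \<le> sqrt (a^2)" by (rule real_sqrt_le_mono)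
  then show "L2_set (\<lambda>n. norm (\<alpha> (m - n))) F \<le> a" unfolding L2_set_def using a_nonneg by simp
qed

lemma em_l2: "t \<in> ball 0 r0 \<Longrightarrow> l2b (\<lambda>n. em m n t) a"
proof -
  assume t: "t \<in> ball 0 r0"
  have "l2b (\<lambda>n. em m n t) (1 * a)"
  proof (rule l2b_mono[OF _ _ alpha_l2])
    show "norm (em m n t) \<le> 1 * norm (\<alpha> (m - n))" for n
    proof (cases "N \<le> \<bar>n\<bar>")
      case False then show ?thesis by (simp add: em_def)
    next
      case True
      have s: "8 * pi * (a + 1) \<le> norm (sig n t)" by (rule sig_tail[OF t True])
      have e8: "8 * pi * (a + 1) = 8 * pi * a + 8 * pi" by (simp add: algebra_simps)
      have "0 \<le> 8 * pi * a" using a_nonneg by simp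
      then have s4: "4 * pi \<le> norm (sig n t)" using s e8 pi_gt_zero by linarith
      have sp4: "0 < norm (sig n t)" using s4 pi_gt_zero by linarith
      have "4 * pi / norm (sig n t) \<le> 1" by (subst pos_divide_le_eq[OF sp4]) (use s4 in simp)
      then have "4 * pi / norm (sig n t) * norm (\<alpha> (m - n)) \<le> 1 * norm (\<alpha> (m - n))"
        by (rule mult_right_mono) simp
      then show ?thesis using True by (simp add: em_def norm_mult norm_divide)
    qed
  qed simp
  then show ?thesis by simp
qed

lemma U_l2: "t \<in> ball 0 r0 \<Longrightarrow> l2b (\<lambda>n. U m n t) (2 * a)"
  unfolding U_def by (rule Ufix_l2[OF em_bound _ _ em_l2]) auto

end

locale setting2 = setting +
  assumes herm: "\<And>n. \<alpha> n = cnj (\<alpha> (- n))" and gen: "generic \<alpha>"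
begin

lemma Im_sig0: "Im (sig n 0) \<ge> 0" "n < 0 \<Longrightarrow> Im (sig n 0) > 0"
proof -
  have A: "Im (sig n 0) = (if n < 0 then sqrt (\<omega> * of_int (-n)) else 0)"
  proof (cases "n = 0")
    case True then show ?thesis by (simp add: sig_zero)
  next
    case False
    show ?thesis
    proof (cases "n > 0")
      case True
      have "sig n 0 = csqrt (of_real (\<omega> * of_int n))" by (simp add: sig_pos True)
      also have "\<dots> = of_real (sqrt (\<omega> * of_int n))" by (rule csqrt_of_real) (use om True in simp)
      finally show ?thesis using True by simp
    next
      case f: False
      then have nl: "n < 0" using False by simp
      have wn: "\<omega> * of_int n < 0" using mult_pos_neg[OF om, of "of_int n"] nl by simp
      have "sig n 0 = \<i> * csqrt (of_real (\<omega> * of_int (-n)))" by (simp add: sig_neg nl)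
      also have "\<dots> = \<i> * of_real (sqrt (\<omega> * of_int (-n)))" by (subst csqrt_of_real) (use wn in simp_all)
      finally show ?thesis using nl by simp
    qed
  qed
  show "Im (sig n 0) \<ge> 0" unfolding A using mult_pos_neg[OF om, of "of_int n"] by auto
  show "n < 0 \<Longrightarrow> Im (sig n 0) > 0" unfolding A using mult_pos_neg[OF om, of "of_int n"] by simp
qed

lemma herm_neg:
  assumes l: "l2b q B"
    and hom: "\<And>n. sig n 0 * q n + 4 * pi * (\<Sum>\<^sub>\<infinity>k. \<alpha> k * q (n + k)) = 0"
    and n: "n < 0"
  shows "q n = 0"
proof -
  have qb: "norm (q m) \<le> B" for m by (rule l2b_bound[OF l])
  have qs: "(\<lambda>n. (norm (q n))^2) summable_on UNIV" by (rule l2b_summable[OF l])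
  define P where "P = (\<lambda>(n, k). cnj (q n) * (\<alpha> k * q (n + k)))"
  define G1 where "G1 = (\<lambda>(n::int, k::int). (norm (q n))^2 * norm (\<alpha> k))"
  define G2 where "G2 = (\<lambda>(n::int, k::int). (norm (q (n + k)))^2 * norm (\<alpha> k))"
  have sG1: "G1 summable_on UNIV" unfolding G1_def
    by (rule summable_prod_real[OF qs asum]) auto
  have sG2: "G2 summable_on UNIV"
  proof -
    have "G2 summable_on UNIV \<longleftrightarrow> G1 summable_on UNIV"
      by (rule summable_on_reindex_bij_witness[where j = "\<lambda>(n, k). (n + k, k)" and i = "\<lambda>(n, k). (n - k, k)"])
         (auto simp: G1_def G2_def)
    then show ?thesis using sG1 by simp
  qed
  have sP: "P summable_on UNIV"
  proof (rule summable_bound(1)[of "\<lambda>z. G1 z + G2 z"])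
    show "(\<lambda>z. G1 z + G2 z) summable_on UNIV" by (rule summable_on_add[OF sG1 sG2])
    show "norm (P z) \<le> G1 z + G2 z" for z
    proof (cases z)
      case (Pair n k)
      have "0 \<le> (norm (q n) - norm (q (n + k)))^2" by simp
      then have "2 * (norm (q n) * norm (q (n + k))) \<le> (norm (q n))^2 + (norm (q (n + k)))^2"
        by (simp add: power2_eq_square algebra_simps)
      moreover have "0 \<le> norm (q n) * norm (q (n + k))" by simp
      ultimately have "norm (q n) * norm (q (n + k)) \<le> (norm (q n))^2 + (norm (q (n + k)))^2"
        by linarith
      then have "norm (\<alpha> k) * (norm (q n) * norm (q (n + k))) \<le> norm (\<alpha> k) * ((norm (q n))^2 + (norm (q (n + k)))^2)"
        by (rule mult_left_mono) simp
      then show ?thesis using Pair by (simp add: P_def G1_def G2_def norm_mult algebra_simps)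
    qed
  qed
  have inner: "(\<lambda>k. \<alpha> k * q (n + k)) summable_on UNIV" for n by (rule summable_au[OF qb])
  have Seq: "(\<Sum>\<^sub>\<infinity>n. cnj (q n) * (\<Sum>\<^sub>\<infinity>k. \<alpha> k * q (n + k))) = infsum P UNIV"
  proof -
    have "(\<Sum>\<^sub>\<infinity>n. cnj (q n) * (\<Sum>\<^sub>\<infinity>k. \<alpha> k * q (n + k))) = (\<Sum>\<^sub>\<infinity>n. \<Sum>\<^sub>\<infinity>k. P (n, k))"
      unfolding P_def by (simp add: infsum_cmult_right')
    also have "\<dots> = infsum P (Sigma UNIV (\<lambda>_. UNIV))"
      by (rule infsum_Sigma_banach) (use sP in simp)
    finally show ?thesis by simp
  qed
  have Ssum: "(\<lambda>n. cnj (q n) * (\<Sum>\<^sub>\<infinity>k. \<alpha> k * q (n + k))) summable_on UNIV"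
  proof -
    have "(\<lambda>n. \<Sum>\<^sub>\<infinity>k. P (n, k)) summable_on UNIV"
      using summable_on_Sigma_banach[of "\<lambda>n k. P (n, k)" UNIV "\<lambda>_. UNIV"] sP by simp
    then show ?thesis unfolding P_def by (simp add: infsum_cmult_right')
  qed
  have Preal: "cnj (infsum P UNIV) = infsum P UNIV"
  proof -
    have "cnj (infsum P UNIV) = (\<Sum>\<^sub>\<infinity>z. cnj (P z))" by simp
    also have "\<dots> = infsum P UNIV"
    proof (rule infsum_reindex_bij_witness[where j = "\<lambda>(n, k). (n + k, - k)" and i = "\<lambda>(n, k). (n + k, - k)"])
      fix z :: "int \<times> int"
      show "(case (case z of (n, k) \<Rightarrow> (n + k, - k)) of (n, k) \<Rightarrow> (n + k, - k)) = z" by (cases z) simp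
      show "(case z of (n, k) \<Rightarrow> (n + k, - k)) \<in> UNIV" by simp
      show "(case (case z of (n, k) \<Rightarrow> (n + k, - k)) of (n, k) \<Rightarrow> (n + k, - k)) = z" by (cases z) simp
      show "(case z of (n, k) \<Rightarrow> (n + k, - k)) \<in> UNIV" by simp
      show "P (case z of (n, k) \<Rightarrow> (n + k, - k)) = cnj (P z)"
      proof (cases z)
        case (Pair n k)
        have "cnj (\<alpha> k) = \<alpha> (- k)" using herm[of "-k"] by simp
        then show ?thesis using Pair by (simp add: P_def mult.commute mult.left_commute)
      qed
    qed
    finally show ?thesis .
  qed
  have "Im (cnj (infsum P UNIV)) = - Im (infsum P UNIV)" by simp
  then have ImP: "Im (infsum P UNIV) = 0" using Preal by simp
  define T where "T = (\<lambda>n. Im (sig n 0) * (norm (q n))^2)"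
  have Teq: "T n = Im (- 4 * pi * (cnj (q n) * (\<Sum>\<^sub>\<infinity>k. \<alpha> k * q (n + k))))" for n
  proof -
    have "sig n 0 * q n = - 4 * pi * (\<Sum>\<^sub>\<infinity>k. \<alpha> k * q (n + k))" using hom[of n] by (simp add: algebra_simps eq_neg_iff_add_eq_0)
    then have "cnj (q n) * (sig n 0 * q n) = - 4 * pi * (cnj (q n) * (\<Sum>\<^sub>\<infinity>k. \<alpha> k * q (n + k)))"
      by (simp add: algebra_simps)
    moreover have "cnj (q n) * (sig n 0 * q n) = sig n 0 * of_real ((norm (q n))^2)"
    proof -
      have "cnj (q n) * q n = of_real ((norm (q n))^2)"
        by (subst mult.commute) (rule complex_norm_square[symmetric])
      then show ?thesis by (simp add: mult.left_commute)
    qed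
    moreover have "Im (sig n 0 * of_real ((norm (q n))^2)) = T n" by (simp add: T_def)
    ultimately show ?thesis by simp
  qed
  have eqT: "T = (\<lambda>n. Im (- 4 * pi * (cnj (q n) * (\<Sum>\<^sub>\<infinity>k. \<alpha> k * q (n + k)))))"
    by (rule ext) (rule Teq)
  have sT: "T summable_on UNIV"
  proof -
    have "(\<lambda>n. - 4 * pi * (cnj (q n) * (\<Sum>\<^sub>\<infinity>k. \<alpha> k * q (n + k)))) summable_on UNIV"
      by (rule summable_on_cmult_right[OF Ssum])
    then have "(\<lambda>n. Im (- 4 * pi * (cnj (q n) * (\<Sum>\<^sub>\<infinity>k. \<alpha> k * q (n + k))))) summable_on UNIV"
      by (rule summable_on_Im)
    then show ?thesis unfolding eqT .
  qed
  have iT: "infsum T UNIV = 0"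
  proof -
    have "infsum T UNIV = (\<Sum>\<^sub>\<infinity>n. Im (- 4 * pi * (cnj (q n) * (\<Sum>\<^sub>\<infinity>k. \<alpha> k * q (n + k)))))"
      unfolding eqT ..
    also have "\<dots> = Im (\<Sum>\<^sub>\<infinity>n. - 4 * pi * (cnj (q n) * (\<Sum>\<^sub>\<infinity>k. \<alpha> k * q (n + k))))"
      by (rule infsum_Im) (rule summable_on_cmult_right[OF Ssum])
    also have "\<dots> = Im (- 4 * pi * (\<Sum>\<^sub>\<infinity>n. cnj (q n) * (\<Sum>\<^sub>\<infinity>k. \<alpha> k * q (n + k))))"
      by (simp only: infsum_cmult_right')
    also have "\<dots> = Im (- 4 * pi * infsum P UNIV)" by (simp only: Seq)
    also have "\<dots> = 0" using ImP by simp
    finally show ?thesis .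
  qed
  have "T n = 0" by (rule nonneg_infsum_zero[OF sT _ iT]) (simp add: T_def Im_sig0(1))
  then have "(norm (q n))^2 = 0" using Im_sig0(2)[OF n] by (simp add: T_def)
  then show ?thesis by simp
qed


lemma Mx_expand:
  assumes n: "n \<in> Hd"
  shows "(\<Sum>m\<in>Hd. Mx n m t * x m) = sig n t * x n + 4 * pi * (\<Sum>m\<in>Hd. \<alpha> (m - n) * x m)
           + 4 * pi * (\<Sum>m\<in>Hd. x m * (\<Sum>\<^sub>\<infinity>k. \<alpha> k * U m (n + k) t))"
proof -
  have "(\<Sum>m\<in>Hd. Mx n m t * x m) = (\<Sum>m\<in>Hd. (if n = m then sig n t * x m else 0)
      + 4 * pi * (\<alpha> (m - n) * x m) + 4 * pi * (x m * (\<Sum>\<^sub>\<infinity>k. \<alpha> k * U m (n + k) t)))"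
    by (intro sum.cong refl) (auto simp: Mx_def algebra_simps)
  also have "\<dots> = (\<Sum>m\<in>Hd. (if n = m then sig n t * x m else 0))
      + (\<Sum>m\<in>Hd. 4 * pi * (\<alpha> (m - n) * x m)) + (\<Sum>m\<in>Hd. 4 * pi * (x m * (\<Sum>\<^sub>\<infinity>k. \<alpha> k * U m (n + k) t)))"
    by (simp only: sum.distrib)
  also have "(\<Sum>m\<in>Hd. (if n = m then sig n t * x m else 0)) = sig n t * x n"
    using n Hd_finite by (simp add: sum.delta)
  finally show ?thesis by (simp only: sum_distrib_left)
qed

lemma ker0:
  assumes x: "\<And>n. n \<in> Hd \<Longrightarrow> (\<Sum>m\<in>Hd. Mx n m 0 * x m) = 0" and m: "m \<in> Hd"
  shows "x m = 0"
proof -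
  have t0: "(0::complex) \<in> ball 0 r0" using r0 by simp
  define qT where "qT = (\<lambda>j. \<Sum>m\<in>Hd. x m * U m j 0)"
  define q where "q = (\<lambda>j. (if j \<in> Hd then x j else 0) + qT j)"
  have qT_head: "qT j = 0" if "j \<in> Hd" for j using that by (simp add: qT_def U_head Hd_iff)
  have q_head: "q j = x j" if "j \<in> Hd" for j using that qT_head by (simp add: q_def)
  have q_tail: "q j = qT j" if "N \<le> \<bar>j\<bar>" for j using that by (simp add: q_def Hd_iff)
  have l2q: "l2b q ((\<Sum>j\<in>Hd. norm (if j \<in> Hd then x j else 0)) + (\<Sum>m\<in>Hd. norm (x m) * (2 * a)))"
    unfolding q_def
  proof (rule l2b_add)
    show "l2b (\<lambda>j. if j \<in> Hd then x j else 0) (\<Sum>j\<in>Hd. norm (if j \<in> Hd then x j else 0))"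
      by (rule l2b_finsupp[OF Hd_finite]) simp
    show "l2b qT (\<Sum>m\<in>Hd. norm (x m) * (2 * a))" unfolding qT_def
    proof (rule l2b_finsum[OF Hd_finite])
      fix m assume "m \<in> Hd"
      show "l2b (\<lambda>j. x m * U m j 0) (norm (x m) * (2 * a))"
        by (rule l2b_mono[OF _ _ U_l2[OF t0, of m]]) (simp_all add: norm_mult)
    qed
  qed
  then obtain Bq where l2q': "l2b q Bq" by blast
  have qb: "norm (q j) \<le> Bq" for j by (rule l2b_bound[OF l2q'])
  define CT where "CT = (\<Sum>m\<in>Hd. norm (x m) * 2)"
  have qTb: "norm (qT j) \<le> CT" for j
  proof -
    have "norm (qT j) \<le> (\<Sum>m\<in>Hd. norm (x m * U m j 0))" unfolding qT_def by (rule norm_sum)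
    also have "\<dots> \<le> CT" unfolding CT_def
      by (intro sum_mono) (simp add: norm_mult mult_left_mono U_bound[OF t0])
    finally show ?thesis .
  qed
  have qTfix: "qT n = Kt 0 qT n + (\<Sum>m\<in>Hd. x m * em m n 0)" if n: "N \<le> \<bar>n\<bar>" for n
  proof -
    have K2: "Kt 0 (\<lambda>j. \<Sum>m\<in>Hd. x m * U m j 0) n = (\<Sum>m\<in>Hd. x m * Kt 0 (\<lambda>j. U m j 0) n)"
      by (rule Kt_finsum[OF Hd_finite]) (rule U_bound[OF t0])
    have "qT n = (\<Sum>m\<in>Hd. x m * (Kt 0 (\<lambda>j. U m j 0) n + em m n 0))"
      unfolding qT_def using U_fix[OF t0 n] by simp
    also have "\<dots> = Kt 0 qT n + (\<Sum>m\<in>Hd. x m * em m n 0)"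
      unfolding qT_def K2 by (simp add: distrib_left sum.distrib)
    finally show ?thesis .
  qed
  have tp: "(\<lambda>j. if N \<le> \<bar>j\<bar> then q j else 0) = qT"
    by (rule ext) (auto simp: q_tail qT_head Hd_iff)
  have convq: "(\<Sum>\<^sub>\<infinity>k. \<alpha> k * q (n + k)) = (\<Sum>\<^sub>\<infinity>k. \<alpha> k * qT (n + k)) + (\<Sum>m\<in>Hd. \<alpha> (m - n) * q m)" for n
  proof -
    have "(\<lambda>k. \<alpha> k * (if N \<le> \<bar>n + k\<bar> then q (n + k) else 0)) = (\<lambda>k. \<alpha> k * qT (n + k))"
      using tp by (intro ext) metis
    then show ?thesis using conv_split[where q = q and Cq = Bq and n = n, OF qb] by simp
  qed
  have SHq: "(\<Sum>m\<in>Hd. \<alpha> (m - n) * q m) = (\<Sum>m\<in>Hd. \<alpha> (m - n) * x m)" for n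
    by (intro sum.cong refl) (simp add: q_head)
  have hom: "sig n 0 * q n + 4 * pi * (\<Sum>\<^sub>\<infinity>k. \<alpha> k * q (n + k)) = 0" for n
  proof (cases "N \<le> \<bar>n\<bar>")
    case True
    have sn: "sig n 0 \<noteq> 0" by (rule sig_tail'(3)[OF t0 True])
    have "(\<Sum>m\<in>Hd. x m * em m n 0) = (\<Sum>m\<in>Hd. (\<alpha> (m - n) * x m) * (- (4 * pi / sig n 0)))"
      using True by (intro sum.cong) (auto simp: em_def)
    also have "\<dots> = (\<Sum>m\<in>Hd. \<alpha> (m - n) * x m) * (- (4 * pi / sig n 0))"
      by (rule sum_distrib_right[symmetric])
    finally have e: "(\<Sum>m\<in>Hd. x m * em m n 0) = - (4 * pi / sig n 0) * (\<Sum>m\<in>Hd. \<alpha> (m - n) * x m)"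
      by simp
    have "q n = - (4 * pi / sig n 0) * (\<Sum>\<^sub>\<infinity>k. \<alpha> k * qT (n + k)) - (4 * pi / sig n 0) * (\<Sum>m\<in>Hd. \<alpha> (m - n) * x m)"
      using q_tail[OF True] qTfix[OF True] e True by (simp add: Kt_def)
    also have "\<dots> = - (4 * pi / sig n 0) * (\<Sum>\<^sub>\<infinity>k. \<alpha> k * q (n + k))"
      unfolding convq SHq by (simp add: algebra_simps)
    finally have "q n = - (4 * pi / sig n 0) * (\<Sum>\<^sub>\<infinity>k. \<alpha> k * q (n + k))" .
    then have "sig n 0 * q n = - (4 * pi) * (\<Sum>\<^sub>\<infinity>k. \<alpha> k * q (n + k))" using sn by simp
    then show ?thesis by simp
  next
    case False
    then have nH: "n \<in> Hd" by (simp add: Hd_iff)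
    have SU: "(\<Sum>m\<in>Hd. x m * (\<Sum>\<^sub>\<infinity>k. \<alpha> k * U m (n + k) 0)) = (\<Sum>\<^sub>\<infinity>k. \<alpha> k * qT (n + k))"
    proof -
      have "(\<Sum>m\<in>Hd. x m * (\<Sum>\<^sub>\<infinity>k. \<alpha> k * U m (n + k) 0)) = (\<Sum>m\<in>Hd. \<Sum>\<^sub>\<infinity>k. x m * (\<alpha> k * U m (n + k) 0))"
        by (simp add: infsum_cmult_right')
      also have "\<dots> = (\<Sum>\<^sub>\<infinity>k. \<Sum>m\<in>Hd. x m * (\<alpha> k * U m (n + k) 0))"
        by (rule infsum_finsum[symmetric, OF Hd_finite], rule summable_on_cmult_right, rule summable_au[OF U_bound[OF t0]])
      also have "\<dots> = (\<Sum>\<^sub>\<infinity>k. \<alpha> k * qT (n + k))"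
        unfolding qT_def by (intro infsum_cong) (simp add: sum_distrib_left mult.left_commute)
      finally show ?thesis .
    qed
    have "0 = (\<Sum>m\<in>Hd. Mx n m 0 * x m)" using x[OF nH] by simp
    also have "\<dots> = sig n 0 * x n + 4 * pi * (\<Sum>m\<in>Hd. \<alpha> (m - n) * x m)
           + 4 * pi * (\<Sum>m\<in>Hd. x m * (\<Sum>\<^sub>\<infinity>k. \<alpha> k * U m (n + k) 0))" by (rule Mx_expand[OF nH])
    also have "\<dots> = sig n 0 * q n + 4 * pi * (\<Sum>\<^sub>\<infinity>k. \<alpha> k * q (n + k))"
      unfolding SU convq SHq q_head[OF nH] by (simp add: algebra_simps)
    finally show ?thesis by simp
  qed
  have neg: "q n = 0" if "n < 0" for n by (rule herm_neg[OF l2q' hom that])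
  have row: "(\<Sum>\<^sub>\<infinity>k. \<alpha> k * q (n + k)) = 0" if "q n = 0" for n
    using hom[of n] that by simp
  have "q m = 0" by (rule gen_all[OF gen asum qb neg row])
  then show ?thesis using q_head[OF m] by simp
qed

end

lemma even_odd_split:
  fixes f :: "complex \<Rightarrow> complex"
  assumes hol: "f holomorphic_on ball 0 r" and r: "r > 0"
  shows "\<exists>Ev Od. Ev holomorphic_on ball 0 (r^2) \<and> Od holomorphic_on ball 0 (r^2) \<and>
           (\<forall>t\<in>ball 0 r. f t = Ev (t^2) + t * Od (t^2))"
proof -
  define a where "a k = (deriv ^^ k) f 0 / fact k" for k
  have ser: "(\<lambda>k. a k * t^k) sums f t" if "t \<in> ball 0 r" for t
    using holomorphic_power_series[OF hol that] by (simp add: a_def)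
  have absum: "summable (\<lambda>k. norm (a k) * s^k)" if s: "0 \<le> s" "s < r" for s :: real
  proof -
    define s' where "s' = (s + r) / 2"
    have s'r: "s < s'" "s' < r" using s by (auto simp: s'_def)
    have "of_real s' \<in> ball (0::complex) r" using s'r s by (simp add: dist_norm)
    then have "summable (\<lambda>k. a k * (of_real s')^k)" using ser sums_summable by blast
    then have "summable (\<lambda>k. norm (a k * (of_real s :: complex)^k))"
      by (rule powser_insidea) (use s s'r in simp)
    then show ?thesis by (simp add: norm_mult norm_power abs_of_nonneg s)
  qed
  have grp: "summable (\<lambda>n. g (2 * n))" "summable (\<lambda>n. g (2 * n + 1))"
    if g: "summable g" "\<And>k. g k \<ge> 0" for g :: "nat \<Rightarrow> real"
  proof -
    have "(\<lambda>n. sum g {n * 2..<n * 2 + 2}) sums (suminf g)"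
      by (rule sums_group) (use g summable_sums in auto)
    then have sg: "summable (\<lambda>n. g (2 * n) + g (2 * n + 1))"
      by (simp add: sums_summable[of _ "suminf g"] numeral_2_eq_2 mult.commute)
    show "summable (\<lambda>n. g (2 * n))"
      by (rule summable_comparison_test[OF _ sg]) (use g in auto)
    show "summable (\<lambda>n. g (2 * n + 1))"
      by (rule summable_comparison_test[OF _ sg]) (use g in auto)
  qed
  have ev: "summable (\<lambda>n. norm (a (2 * n)) * s^(2 * n))" "summable (\<lambda>n. norm (a (2 * n + 1)) * s^(2 * n + 1))"
    if "0 \<le> s" "s < r" for s :: real
    using grp[of "\<lambda>k. norm (a k) * s^k"] absum[OF that] that by auto
  define ce where "ce = (\<lambda>n. a (2 * n))"
  define co where "co = (\<lambda>n. a (2 * n + 1))"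
  have sev: "summable (\<lambda>n. norm (ce n * w^n))" if "norm w < r^2" for w :: complex
  proof -
    define s where "s = sqrt (norm w)"
    have s0: "0 \<le> s" and sr: "s < r" using that r by (auto simp: s_def real_sqrt_less_iff intro: real_less_lsqrt)
    have "norm w = s^2" by (simp add: s_def)
    then have "norm (ce n * w^n) = norm (a (2 * n)) * s^(2 * n)" for n
      by (simp add: ce_def norm_mult norm_power power_mult)
    then show ?thesis using ev(1)[OF s0 sr] by simp
  qed
  have sod: "summable (\<lambda>n. norm (co n * w^n))" if "norm w < r^2" for w :: complex
  proof -
    define s where "s = sqrt (norm w)"
    have s0: "0 \<le> s" and sr: "s < r" using that r by (auto simp: s_def real_sqrt_less_iff intro: real_less_lsqrt)
    show ?thesis
    proof (cases "s = 0")
      case True then have "w = 0" by (simp add: s_def)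
      then show ?thesis using summable_0_powser[of "\<lambda>n. norm (co n)"] by (simp add: norm_mult norm_power)
    next
      case False
      then have sp: "s > 0" using s0 by simp
      have "norm w = s^2" by (simp add: s_def)
      then have "norm (co n * w^n) = (norm (a (2 * n + 1)) * s^(2 * n + 1)) / s" for n
        using sp by (simp add: co_def norm_mult norm_power power_mult)
      then show ?thesis using summable_divide[OF ev(2)[OF s0 sr], of s] by simp
    qed
  qed
  define Ev where "Ev = eval_fps (Abs_fps ce)"
  define Od where "Od = eval_fps (Abs_fps co)"
  have cr: "ereal (r^2) \<le> conv_radius c" if "\<And>w. norm w < r^2 \<Longrightarrow> summable (\<lambda>n. norm (c n * w^n))" for c :: "nat \<Rightarrow> complex"
  proof (rule conv_radius_geI_ex')
    fix \<rho> :: real assume "0 < \<rho>" "ereal \<rho> < ereal (r^2)"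
    then have nr: "norm (of_real \<rho> :: complex) < r^2" by simp
    show "summable (\<lambda>n. c n * of_real \<rho> ^ n)" by (rule summable_norm_cancel[OF that[OF nr]])
  qed
  have hE: "Ev holomorphic_on ball 0 (r^2)" unfolding Ev_def
  proof (rule holomorphic_on_eval_fps)
    have "ereal (r^2) \<le> fps_conv_radius (Abs_fps ce)" unfolding fps_conv_radius_def using cr[OF sev] by simp
    then show "ball 0 (r^2) \<subseteq> eball 0 (fps_conv_radius (Abs_fps ce))"
      using eball_mono[of "ereal (r^2)"] by simp
  qed
  have hO: "Od holomorphic_on ball 0 (r^2)" unfolding Od_def
  proof (rule holomorphic_on_eval_fps)
    have "ereal (r^2) \<le> fps_conv_radius (Abs_fps co)" unfolding fps_conv_radius_def using cr[OF sod] by simp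
    then show "ball 0 (r^2) \<subseteq> eball 0 (fps_conv_radius (Abs_fps co))"
      using eball_mono[of "ereal (r^2)"] by simp
  qed
  have eq: "f t = Ev (t^2) + t * Od (t^2)" if t: "t \<in> ball 0 r" for t
  proof -
    have nt: "norm (t^2) < r^2"
    proof -
      have "norm t < r" using t by simp
      then have "norm t ^ 2 < r ^ 2" by (intro power_strict_mono) auto
      then show ?thesis by (simp add: norm_power)
    qed
    have s1: "(\<lambda>n. ce n * (t^2)^n) sums Ev (t^2)"
      unfolding Ev_def eval_fps_def using summable_norm_cancel[OF sev[OF nt]] by (simp add: summable_sums)
    have s2: "(\<lambda>n. co n * (t^2)^n) sums Od (t^2)"
      unfolding Od_def eval_fps_def using summable_norm_cancel[OF sod[OF nt]] by (simp add: summable_sums)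
    have s3: "(\<lambda>n. ce n * (t^2)^n + t * (co n * (t^2)^n)) sums (Ev (t^2) + t * Od (t^2))"
      by (rule sums_add[OF s1 sums_mult[OF s2]])
    have "(\<lambda>n. sum (\<lambda>k. a k * t^k) {n * 2..<n * 2 + 2}) sums f t"
      by (rule sums_group[OF ser[OF t]]) simp
    moreover have "sum (\<lambda>k. a k * t^k) {n * 2..<n * 2 + 2} = ce n * (t^2)^n + t * (co n * (t^2)^n)" for n
    proof -
      have "{n * 2..<n * 2 + 2} = {2 * n, 2 * n + 1}" by auto
      moreover have pw: "(t^n)^2 = (t^2)^n" by (simp add: power_mult[symmetric] mult.commute)
      ultimately show ?thesis by (simp add: ce_def co_def power_mult algebra_simps pw)
    qed
    ultimately have "(\<lambda>n. ce n * (t^2)^n + t * (co n * (t^2)^n)) sums f t" by simp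
    then show ?thesis using s3 sums_unique2 by blast
  qed
  show ?thesis using hE hO eq by blast
qed

lemma det_mat_hol:
  fixes A :: "nat \<Rightarrow> nat \<Rightarrow> complex \<Rightarrow> complex"
  assumes "\<And>i j. i < K \<Longrightarrow> j < K \<Longrightarrow> A i j holomorphic_on S"
  shows "(\<lambda>t. det (mat K K (\<lambda>(i, j). A i j t))) holomorphic_on S"
proof -
  have eq: "det (mat K K (\<lambda>(i, j). A i j t)) =
      (\<Sum>p\<in>{p. p permutes {0..<K}}. signof p * (\<Prod>i = 0..<K. A i (p i) t))" for t
  proof -
    have "det (mat K K (\<lambda>(i, j). A i j t)) =
        (\<Sum>p\<in>{p. p permutes {0..<K}}. signof p * (\<Prod>i = 0..<K. mat K K (\<lambda>(i, j). A i j t) $$ (i, p i)))"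
      by (rule det_def') simp
    also have "\<dots> = (\<Sum>p\<in>{p. p permutes {0..<K}}. signof p * (\<Prod>i = 0..<K. A i (p i) t))"
    proof (intro sum.cong refl arg_cong2[where f = "(*)"] prod.cong)
      fix p i assume p: "p \<in> {p. p permutes {0..<K}}" and i: "i \<in> {0..<K}"
      have "p i \<in> {0..<K}" using permutes_in_image[of p "{0..<K}" i] p i by simp
      then show "mat K K (\<lambda>(i, j). A i j t) $$ (i, p i) = A i (p i) t" using i by simp
    qed
    finally show ?thesis .
  qed
  have "(\<lambda>t. \<Sum>p\<in>{p. p permutes {0..<K}}. signof p * (\<Prod>i = 0..<K. A i (p i) t)) holomorphic_on S"
  proof (intro holomorphic_intros)
    fix p i assume p: "p \<in> {p. p permutes {0..<K}}" and i: "i \<in> {0..<K}"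
    have "p i \<in> {0..<K}" using permutes_in_image[of p "{0..<K}" i] p i by simp
    then show "A i (p i) holomorphic_on S" using assms i by simp
  qed
  then show ?thesis unfolding eq .
qed

context setting2
begin

definition K :: nat where "K = nat (2 * N - 1)"
definition ix :: "nat \<Rightarrow> int" where "ix i = int i - (N - 1)"
definition jx :: "int \<Rightarrow> nat" where "jx n = nat (n + (N - 1))"

lemma ix_Hd: "i < K \<Longrightarrow> ix i \<in> Hd"
  unfolding K_def ix_def Hd_def using N1 by auto

lemma jx_K: "n \<in> Hd \<Longrightarrow> jx n < K"
  unfolding K_def jx_def Hd_def using N1 by auto

lemma ix_jx: "n \<in> Hd \<Longrightarrow> ix (jx n) = n"
  unfolding jx_def ix_def Hd_def using N1 by auto

lemma jx_ix: "i < K \<Longrightarrow> jx (ix i) = i"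
  unfolding jx_def ix_def K_def using N1 by auto

lemma sum_Hd_reindex: "(\<Sum>m\<in>Hd. g m) = (\<Sum>j<K. g (ix j))"
  by (rule sum.reindex_bij_witness[where i = ix and j = jx]) (auto simp: ix_Hd jx_K ix_jx jx_ix)

definition Mm :: "complex \<Rightarrow> complex mat" where "Mm t = mat K K (\<lambda>(i, j). Mx (ix i) (ix j) t)"
definition bv :: "complex \<Rightarrow> complex vec" where "bv t = vec K (\<lambda>i. bx (ix i) t)"
definition dM :: "complex \<Rightarrow> complex" where "dM t = det (Mm t)"

lemma Mm_carrier: "Mm t \<in> carrier_mat K K" by (simp add: Mm_def)

lemma Mx_hol: "(\<lambda>t. Mx n m t) holomorphic_on ball 0 r0"
proof -
  have S: "(\<lambda>t. \<Sum>\<^sub>\<infinity>k. \<alpha> k * U m (n + k) t) holomorphic_on ball 0 r0"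
  proof (rule holomorphic_infsum[where M = "\<lambda>k. norm (\<alpha> k) * 2"])
    show "(\<lambda>t. \<alpha> k * U m (n + k) t) holomorphic_on ball 0 r0" for k by (intro holomorphic_intros U_hol)
    show "norm (\<alpha> k * U m (n + k) t) \<le> norm (\<alpha> k) * 2" if "t \<in> ball 0 r0" for k t
      unfolding norm_mult by (rule mult_left_mono[OF U_bound[OF that]]) simp
    show "(\<lambda>k. norm (\<alpha> k) * 2) summable_on UNIV" by (rule summable_on_cmult_left[OF asum])
  qed auto
  have D: "(\<lambda>t. if n = m then sig n t else 0) holomorphic_on ball 0 r0"
    by (cases "n = m") (simp_all add: sig_hol)
  show ?thesis unfolding Mx_def by (intro holomorphic_intros S D)
qed

lemma bx_hol: "(\<lambda>t. bx n t) holomorphic_on ball 0 r0"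
proof -
  have S: "(\<lambda>t. \<Sum>\<^sub>\<infinity>k. \<alpha> k * U0 (n + k) t) holomorphic_on ball 0 r0"
  proof (rule holomorphic_infsum[where M = "\<lambda>k. norm (\<alpha> k) * (2 * sqrt (2 * pi))"])
    show "(\<lambda>t. \<alpha> k * U0 (n + k) t) holomorphic_on ball 0 r0" for k by (intro holomorphic_intros U0_hol)
    show "norm (\<alpha> k * U0 (n + k) t) \<le> norm (\<alpha> k) * (2 * sqrt (2 * pi))" if "t \<in> ball 0 r0" for k t
      unfolding norm_mult by (rule mult_left_mono[OF U0_bound[OF that]]) simp
    show "(\<lambda>k. norm (\<alpha> k) * (2 * sqrt (2 * pi))) summable_on UNIV" by (rule summable_on_cmult_left[OF asum])
  qed auto
  show ?thesis unfolding bx_def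
    by (intro holomorphic_intros S sig_hol) (use one_plus_sig_nz in auto)
qed

lemma dM_hol: "dM holomorphic_on ball 0 r0"
proof -
  have "(\<lambda>t. det (mat K K (\<lambda>(i, j). Mx (ix i) (ix j) t))) holomorphic_on ball 0 r0"
    by (rule det_mat_hol) (rule Mx_hol)
  then show ?thesis by (simp add: dM_def[abs_def] Mm_def)
qed

lemma Mm_mult: "j < K \<Longrightarrow> (Mm t *\<^sub>v v) $ j = (\<Sum>i<K. Mx (ix j) (ix i) t * v $ i)" if "dim_vec v = K"
  using that by (simp add: Mm_def scalar_prod_def lessThan_atLeast0)

lemma dM0: "dM 0 \<noteq> 0"
proof
  assume "dM 0 = 0"
  then obtain v where v: "v \<in> carrier_vec K" "v \<noteq> 0\<^sub>v K" "Mm 0 *\<^sub>v v = 0\<^sub>v K"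
    using det_0_iff_vec_prod_zero[OF Mm_carrier[of 0]] unfolding dM_def by blast
  have dv: "dim_vec v = K" using v(1) by simp
  define x where "x = (\<lambda>n. if n \<in> Hd then v $ jx n else 0)"
  have x_ix: "x (ix i) = v $ i" if "i < K" for i using that by (simp add: x_def ix_Hd jx_ix)
  have "x m = 0" if m: "m \<in> Hd" for m
  proof (rule ker0[OF _ m])
    fix n assume n: "n \<in> Hd"
    have "(\<Sum>m\<in>Hd. Mx n m 0 * x m) = (\<Sum>i<K. Mx n (ix i) 0 * x (ix i))" by (rule sum_Hd_reindex)
    also have "\<dots> = (\<Sum>i<K. Mx (ix (jx n)) (ix i) 0 * v $ i)"
      using ix_jx[OF n] x_ix by (intro sum.cong) auto
    also have "\<dots> = (Mm 0 *\<^sub>v v) $ (jx n)" using Mm_mult[OF dv jx_K[OF n]] by simp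
    also have "\<dots> = 0" using v(3) jx_K[OF n] by simp
    finally show "(\<Sum>m\<in>Hd. Mx n m 0 * x m) = 0" .
  qed
  then have "v $ i = 0" if "i < K" for i using x_ix[OF that] ix_Hd[OF that] by simp
  then have "v = 0\<^sub>v K" using dv by (intro eq_vecI) auto
  then show False using v(2) by simp
qed

lemma exists_r1: "\<exists>r1. 0 < r1 \<and> r1 \<le> r0 \<and> (\<forall>t\<in>ball 0 r1. dM t \<noteq> 0)"
proof -
  have "continuous (at 0) dM"
    using holomorphic_on_imp_continuous_on[OF dM_hol] r0 continuous_on_eq_continuous_at[of "ball 0 r0" dM]
    by simp
  then obtain e where e: "e > 0" "\<And>y. dist 0 y < e \<Longrightarrow> dM y \<noteq> 0"
    using continuous_at_avoid[of 0 dM 0] dM0 by blast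
  show ?thesis by (rule exI[of _ "min e r0"]) (use e r0 in \<open>auto simp: dist_norm\<close>)
qed

definition X :: "nat \<Rightarrow> complex \<Rightarrow> complex" where
  "X i t = det (replace_col (Mm t) (bv t) i) / dM t"

definition Q :: "int \<Rightarrow> complex \<Rightarrow> complex" where
  "Q n t = (if n \<in> Hd then X (jx n) t else U0 n t + (\<Sum>m\<in>Hd. X (jx m) t * U m n t))"

lemma X_hol:
  assumes r1: "r1 \<le> r0" "\<forall>t\<in>ball 0 r1. dM t \<noteq> 0"
  shows "X i holomorphic_on ball 0 r1"
proof -
  have sub: "ball 0 r1 \<subseteq> ball (0::complex) r0" using r1 by auto
  have "(\<lambda>t. det (mat K K (\<lambda>(k, j). if j = i then bx (ix k) t else Mx (ix k) (ix j) t))) holomorphic_on ball 0 r0"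
  proof (rule det_mat_hol)
    fix k j assume "k < K" "j < K"
    show "(\<lambda>t. if j = i then bx (ix k) t else Mx (ix k) (ix j) t) holomorphic_on ball 0 r0"
      by (cases "j = i") (simp_all add: bx_hol Mx_hol)
  qed
  moreover have "det (replace_col (Mm t) (bv t) i) = det (mat K K (\<lambda>(k, j). if j = i then bx (ix k) t else Mx (ix k) (ix j) t))" for t
  proof -
    have "replace_col (Mm t) (bv t) i = mat K K (\<lambda>(k, j). if j = i then bx (ix k) t else Mx (ix k) (ix j) t)"
      by (rule eq_matI) (auto simp: replace_col_def Mm_def bv_def)
    then show ?thesis by simp
  qed
  ultimately have "(\<lambda>t. det (replace_col (Mm t) (bv t) i)) holomorphic_on ball 0 r0" by simp
  then have h1: "(\<lambda>t. det (replace_col (Mm t) (bv t) i)) holomorphic_on ball 0 r1"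
    using sub holomorphic_on_subset by blast
  have h2: "dM holomorphic_on ball 0 r1" using dM_hol sub holomorphic_on_subset by blast
  show ?thesis unfolding X_def[abs_def] by (intro holomorphic_intros h1 h2) (use r1 in auto)
qed

lemma Q_hol:
  assumes r1: "r1 \<le> r0" "\<forall>t\<in>ball 0 r1. dM t \<noteq> 0"
  shows "Q n holomorphic_on ball 0 r1"
proof -
  have sub: "ball 0 r1 \<subseteq> ball (0::complex) r0" using r1 by auto
  show ?thesis
  proof (cases "n \<in> Hd")
    case True
    then have "Q n = X (jx n)" by (intro ext) (simp add: Q_def)
    then show ?thesis using X_hol[OF r1] by simp
  next
    case False
    then have "Q n = (\<lambda>t. U0 n t + (\<Sum>m\<in>Hd. X (jx m) t * U m n t))" by (intro ext) (simp add: Q_def)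
    moreover have "(\<lambda>t. U0 n t + (\<Sum>m\<in>Hd. X (jx m) t * U m n t)) holomorphic_on ball 0 r1"
      by (intro holomorphic_intros X_hol[OF r1] holomorphic_on_subset[OF U0_hol sub] holomorphic_on_subset[OF U_hol sub])
    ultimately show ?thesis by simp
  qed
qed

lemma Q_sol:
  assumes r1: "r1 \<le> r0" "\<forall>t\<in>ball 0 r1. dM t \<noteq> 0" and t: "t \<in> ball 0 r1"
    and snz: "\<And>n. sig n t \<noteq> 0"
    and q: "\<And>m. norm (q m) \<le> Cq"
    and eq: "\<And>n. q n = - (4 * pi / sig n t) * (\<Sum>\<^sub>\<infinity>k. \<alpha> k * q (n + k)) - c0 / (sig n t * (1 + sig n t))"
  shows "q n = Q n t"
proof -
  have t0: "t \<in> ball 0 r0" using t r1 by auto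
  note sc = sol_char[OF t0 snz q eq]
  define xv where "xv = vec K (\<lambda>i. q (ix i))"
  have dxv: "dim_vec xv = K" by (simp add: xv_def)
  have Mx_eq: "Mm t *\<^sub>v xv = bv t"
  proof (rule eq_vecI)
    show "dim_vec (Mm t *\<^sub>v xv) = dim_vec (bv t)" by (simp add: Mm_def bv_def)
    fix j assume "j < dim_vec (bv t)"
    then have j: "j < K" by (simp add: bv_def)
    have "(Mm t *\<^sub>v xv) $ j = (\<Sum>i<K. Mx (ix j) (ix i) t * q (ix i))"
      using Mm_mult[OF dxv j] by (simp add: xv_def)
    also have "\<dots> = (\<Sum>m\<in>Hd. Mx (ix j) m t * q m)" by (rule sum_Hd_reindex[symmetric])
    also have "\<dots> = bx (ix j) t" by (rule sc(2)[OF ix_Hd[OF j]])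
    finally show "(Mm t *\<^sub>v xv) $ j = bv t $ j" using j by (simp add: bv_def)
  qed
  have dnz: "dM t \<noteq> 0" using r1 t by auto
  have head: "q m = X (jx m) t" if m: "m \<in> Hd" for m
  proof -
    have k: "jx m < K" by (rule jx_K[OF m])
    have "det (replace_col (Mm t) (Mm t *\<^sub>v xv) (jx m)) = xv $ (jx m) * det (Mm t)"
      by (rule cramer_lemma_mat[OF Mm_carrier _ k]) (simp add: xv_def)
    then have "det (replace_col (Mm t) (bv t) (jx m)) = q m * dM t"
      using Mx_eq k ix_jx[OF m] by (simp add: xv_def dM_def)
    then show ?thesis using dnz by (simp add: X_def)
  qed
  show ?thesis
  proof (cases "n \<in> Hd")
    case True then show ?thesis using head by (simp add: Q_def)
  next
    case False
    then have "N \<le> \<bar>n\<bar>" by (simp add: Hd_iff)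
    then have "q n = U0 n t + (\<Sum>m\<in>Hd. q m * U m n t)" by (rule sc(1))
    also have "\<dots> = U0 n t + (\<Sum>m\<in>Hd. X (jx m) t * U m n t)" using head by simp
    finally show ?thesis using False by (simp add: Q_def)
  qed
qed

end

theorem mainTheorem13:
  fixes \<omega> :: real and \<alpha> :: "int \<Rightarrow> complex"
  assumes "\<omega> > 0"
    and "(\<lambda>n. norm (\<alpha> n)) summable_on UNIV"
    and "\<And>n. \<alpha> n = cnj (\<alpha> (- n))"
    and "\<alpha> 0 = 0"
    and "infsum \<alpha> UNIV = - 1 / (4 * pi)"
    and "generic \<alpha>"
  shows "\<exists>\<epsilon>>0. \<exists>c d :: int \<Rightarrow> complex \<Rightarrow> complex.
     (\<forall>n. c n analytic_on {0} \<and> d n analytic_on {0}) \<and>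
     (\<forall>y::real. 0 < y \<and> y < \<epsilon> \<longrightarrow>
        (let p = \<i> * complex_of_real y in
         \<forall>q :: int \<Rightarrow> complex.
           ((\<lambda>n. (norm (q n))^2) summable_on UNIV) \<and>
           (\<forall>n. q n =
              - (4 * pi / csqrt (of_real (\<omega> * of_int n) - \<i> * p)) *
                  infsum (\<lambda>k. \<alpha> k * q (n + k)) (UNIV - {0})
              - 2 * \<i> * sqrt (2 * pi) /
                  (csqrt (of_real (\<omega> * of_int n) - \<i> * p) *
                   (1 + csqrt (of_real (\<omega> * of_int n) - \<i> * p))))
           \<longrightarrow> (\<forall>n. q n = c n p + d n p * csqrt p)))"
proof -
  note om = assms(1) and asum = assms(2) and herm = assms(3) and a0 = assms(4) and gen = assms(6)
  define aa where "aa = (\<Sum>\<^sub>\<infinity>k. norm (\<alpha> k))"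
  define XX where "XX = (8 * pi * (aa + 1))^2"
  define N :: int where "N = ceiling (2 * XX / \<omega>) + 1"
  define r0 where "r0 = min (1/2) (sqrt (\<omega> / 2))"
  have XX0: "XX \<ge> 0" by (simp add: XX_def)
  have ce: "real_of_int (ceiling (2 * XX / \<omega>)) \<ge> 2 * XX / \<omega>" by (rule le_of_int_ceiling)
  have N1: "N \<ge> 1"
  proof -
    have "2 * XX / \<omega> \<ge> 0" using XX0 om by simp
    then have "ceiling (2 * XX / \<omega>) \<ge> 0" by simp
    then show ?thesis by (simp add: N_def)
  qed
  have Nbig: "(8 * pi * ((\<Sum>\<^sub>\<infinity>k. norm (\<alpha> k)) + 1))^2 \<le> \<omega> * of_int N / 2"
  proof -
    have "real_of_int N \<ge> 2 * XX / \<omega>"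
      unfolding N_def of_int_add of_int_1 using le_of_int_ceiling[of "2 * XX / \<omega>"] by linarith
    then have "\<omega> * real_of_int N \<ge> \<omega> * (2 * XX / \<omega>)" using om by (intro mult_left_mono) auto
    also have "\<omega> * (2 * XX / \<omega>) = 2 * XX" using om by simp
    finally show ?thesis unfolding XX_def aa_def by simp
  qed
  have r0p: "0 < r0" using om by (simp add: r0_def)
  have r0h: "r0 \<le> 1/2" by (simp add: r0_def)
  have r0s: "r0^2 \<le> \<omega>/2"
  proof -
    have "r0 \<le> sqrt (\<omega> / 2)" by (simp add: r0_def)
    then have "r0^2 \<le> (sqrt (\<omega> / 2))^2" using r0p by (intro power_mono) auto
    then show ?thesis using om by simp
  qed
  have loc: "setting2 \<omega> \<alpha> N r0"
    by (intro setting2.intro setting.intro setting2_axioms.intro om asum r0p r0h r0s N1 Nbig herm gen)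
  interpret S: setting2 \<omega> \<alpha> N r0 by (rule loc)
  obtain r1 where r1: "0 < r1" "r1 \<le> r0" "\<forall>t\<in>ball 0 r1. S.dM t \<noteq> 0" using S.exists_r1 by blast
  have ex: "\<exists>EO. fst EO holomorphic_on ball 0 (r1^2) \<and> snd EO holomorphic_on ball 0 (r1^2) \<and>
      (\<forall>t\<in>ball 0 r1. S.Q n t = fst EO (t^2) + t * snd EO (t^2))" for n
  proof -
    obtain Ev Od where "Ev holomorphic_on ball 0 (r1^2)" "Od holomorphic_on ball 0 (r1^2)"
      "\<forall>t\<in>ball 0 r1. S.Q n t = Ev (t^2) + t * Od (t^2)"
      using even_odd_split[OF S.Q_hol[OF r1(2,3)] r1(1)] by blast
    then show ?thesis by (intro exI[of _ "(Ev, Od)"]) simp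
  qed
  have "\<exists>EO. \<forall>n. fst (EO n) holomorphic_on ball 0 (r1^2) \<and> snd (EO n) holomorphic_on ball 0 (r1^2) \<and>
      (\<forall>t\<in>ball 0 r1. S.Q n t = fst (EO n) (t^2) + t * snd (EO n) (t^2))"
    using ex by (intro choice allI)
  then obtain EO where EO: "\<And>n. fst (EO n) holomorphic_on ball 0 (r1^2)" "\<And>n. snd (EO n) holomorphic_on ball 0 (r1^2)"
    "\<And>n t. t \<in> ball 0 r1 \<Longrightarrow> S.Q n t = fst (EO n) (t^2) + t * snd (EO n) (t^2)" by blast
  define c where "c n p = fst (EO n) (- \<i> * p)" for n p
  define d where "d n p = snd (EO n) (- \<i> * p) * ((1 - \<i>) / complex_of_real (sqrt 2))" for n p
  have rot: "(\<lambda>p. - \<i> * p) ` ball 0 (r1^2) \<subseteq> ball 0 (r1^2)" by (auto simp: norm_mult)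
  have rot_hol: "(\<lambda>p::complex. - \<i> * p) holomorphic_on ball 0 (r1^2)" by (intro holomorphic_intros)
  have r12: "r1^2 > 0" using r1 by simp
  have anc: "c n analytic_on {0}" for n
  proof -
    have "(fst (EO n) \<circ> (\<lambda>p. - \<i> * p)) holomorphic_on ball 0 (r1^2)"
      by (rule holomorphic_on_compose_gen[OF rot_hol EO(1) rot])
    then have "c n holomorphic_on ball 0 (r1^2)" by (simp add: c_def[abs_def] o_def)
    then show ?thesis using r12 by (auto simp: analytic_on_def intro!: exI[of _ "r1^2"])
  qed
  have and': "d n analytic_on {0}" for n
  proof -
    have "(snd (EO n) \<circ> (\<lambda>p. - \<i> * p)) holomorphic_on ball 0 (r1^2)"
      by (rule holomorphic_on_compose_gen[OF rot_hol EO(2) rot])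
    then have "(\<lambda>p. snd (EO n) (- \<i> * p)) holomorphic_on ball 0 (r1^2)" by (simp add: o_def)
    then have "d n holomorphic_on ball 0 (r1^2)" unfolding d_def[abs_def] by (intro holomorphic_intros)
    then show ?thesis using r12 by (auto simp: analytic_on_def intro!: exI[of _ "r1^2"])
  qed
  have part1: "\<forall>n. c n analytic_on {0} \<and> d n analytic_on {0}" using anc and' by blast
  have part2: "\<forall>y::real. 0 < y \<and> y < r1^2 \<longrightarrow>
        (let p = \<i> * complex_of_real y in
         \<forall>q :: int \<Rightarrow> complex.
           ((\<lambda>n. (norm (q n))^2) summable_on UNIV) \<and>
           (\<forall>n. q n =
              - (4 * pi / csqrt (of_real (\<omega> * of_int n) - \<i> * p)) *
                  infsum (\<lambda>k. \<alpha> k * q (n + k)) (UNIV - {0})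
              - 2 * \<i> * sqrt (2 * pi) /
                  (csqrt (of_real (\<omega> * of_int n) - \<i> * p) *
                   (1 + csqrt (of_real (\<omega> * of_int n) - \<i> * p))))
           \<longrightarrow> (\<forall>n. q n = c n p + d n p * csqrt p))"
  proof (intro allI impI)
    fix y :: real assume y: "0 < y \<and> y < r1^2"
    define p where "p = \<i> * complex_of_real y"
    define \<tau> where "\<tau> = sqrt y"
    define t where "t = complex_of_real \<tau>"
    have tau0: "\<tau> > 0" using y by (simp add: \<tau>_def)
    have taur: "\<tau> < r1"
    proof -
      have "sqrt y < sqrt (r1^2)" using y by (intro real_sqrt_less_mono) auto
      then show ?thesis using r1 by (simp add: \<tau>_def)
    qed
    have tb1: "t \<in> ball 0 r1" using tau0 taur by (simp add: t_def)
    have tb0: "t \<in> ball 0 r0" using tb1 r1 by auto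
    have t2: "t^2 = complex_of_real y" using y by (simp add: t_def \<tau>_def flip: of_real_power)
    have yw: "y < \<omega>"
    proof -
      have "r1^2 \<le> r0^2" using r1 by (intro power_mono) auto
      then show ?thesis using y r0s om by linarith
    qed
    have arg: "of_real (\<omega> * of_int n) - \<i> * p = complex_of_real (\<omega> * of_int n + y)" for n
      by (simp add: p_def)
    have sigeq: "csqrt (of_real (\<omega> * of_int n) - \<i> * p) = S.sig n t" for n
    proof -
      have L: "csqrt (of_real (\<omega> * of_int n) - \<i> * p) = csqrt (complex_of_real (\<omega> * of_int n + y))"
        by (simp only: arg)
      consider "n = 0" | "n > 0" | "n < 0" by linarith
      then show ?thesis
      proof cases
        case 1
        have "csqrt (complex_of_real (\<omega> * of_int n + y)) = complex_of_real (sqrt y)"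
          using 1 y by (simp add: csqrt_of_real)
        then show ?thesis using 1 L by (simp add: S.sig_zero t_def \<tau>_def)
      next
        case 2
        have "S.sig n t = csqrt (complex_of_real (\<omega> * of_int n) + complex_of_real y)"
          using 2 by (simp add: S.sig_pos t2)
        then show ?thesis using L by simp
      next
        case 3
        have "of_int n \<le> (-1::real)" using 3 by simp
        then have "\<omega> * of_int n \<le> \<omega> * (-1)" by (rule mult_left_mono) (use om in simp)
        then have wn: "\<omega> * of_int n \<le> - \<omega>" by simp
        have A: "csqrt (complex_of_real (\<omega> * of_int n + y)) = \<i> * complex_of_real (sqrt \<bar>\<omega> * of_int n + y\<bar>)"
          using csqrt_of_real_nonpos[of "complex_of_real (\<omega> * of_int n + y)"] wn yw by simp
        have B: "S.sig n t = \<i> * csqrt (complex_of_real (\<omega> * of_int (- n)) - t^2)"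
          using 3 by (simp add: S.sig_neg)
        have "complex_of_real (\<omega> * of_int (- n)) - t^2 = complex_of_real (\<omega> * of_int (- n) - y)"
          by (simp add: t2)
        moreover have "csqrt (complex_of_real (\<omega> * of_int (- n) - y)) = complex_of_real (sqrt (\<omega> * of_int (- n) - y))"
          by (rule csqrt_of_real) (use wn yw in simp)
        moreover have "\<bar>\<omega> * of_int n + y\<bar> = \<omega> * of_int (- n) - y" using wn yw by simp
        ultimately show ?thesis using A B L by simp
      qed
    qed
    have infeq: "infsum (\<lambda>k. \<alpha> k * q (n + k)) (UNIV - {0}) = (\<Sum>\<^sub>\<infinity>k. \<alpha> k * q (n + k))" for q :: "int \<Rightarrow> complex" and n
      by (rule infsum_cong_neutral) (use a0 in auto)
    have c0eq: "2 * \<i> * complex_of_real (sqrt (2 * pi)) = S.c0" by (simp add: S.c0_def)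
    have csp: "csqrt p = ((1 + \<i>) / complex_of_real (sqrt 2)) * t"
    proof (rule csqrt_unique)
      have s2: "(complex_of_real (sqrt 2))^2 = 2" by (simp flip: of_real_power)
      have e1: "(((1 + \<i>) / complex_of_real (sqrt 2)) * t)^2 = ((1 + \<i>)^2 / 2) * t^2"
        by (simp add: power_mult_distrib power_divide s2)
      have e2: "(1 + \<i>)^2 = 2 * \<i>" by (simp add: power2_eq_square algebra_simps)
      show "(((1 + \<i>) / complex_of_real (sqrt 2)) * t)^2 = p" unfolding e1 e2 by (simp add: t2 p_def)
      show "0 < Re ((1 + \<i>) / complex_of_real (sqrt 2) * t) \<or> Re ((1 + \<i>) / complex_of_real (sqrt 2) * t) = 0 \<and> 0 \<le> Im ((1 + \<i>) / complex_of_real (sqrt 2) * t)"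
        using tau0 by (simp add: t_def)
    qed
    have dfac: "((1 - \<i>) / complex_of_real (sqrt 2)) * ((1 + \<i>) / complex_of_real (sqrt 2)) = 1"
    proof -
      have "(1 - \<i>) * (1 + \<i>) = (2::complex)" by (simp add: algebra_simps)
      moreover have "complex_of_real (sqrt 2) * complex_of_real (sqrt 2) = 2"
        by (simp flip: of_real_mult)
      ultimately show ?thesis by (simp add: divide_simps)
    qed
    show "let p = \<i> * complex_of_real y in
         \<forall>q :: int \<Rightarrow> complex.
           ((\<lambda>n. (norm (q n))^2) summable_on UNIV) \<and>
           (\<forall>n. q n =
              - (4 * pi / csqrt (of_real (\<omega> * of_int n) - \<i> * p)) *
                  infsum (\<lambda>k. \<alpha> k * q (n + k)) (UNIV - {0})
              - 2 * \<i> * sqrt (2 * pi) /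
                  (csqrt (of_real (\<omega> * of_int n) - \<i> * p) *
                   (1 + csqrt (of_real (\<omega> * of_int n) - \<i> * p))))
           \<longrightarrow> (\<forall>n. q n = c n p + d n p * csqrt p)"
      unfolding Let_def p_def[symmetric]
    proof (intro allI impI)
      fix q :: "int \<Rightarrow> complex" and n :: int
      assume h: "((\<lambda>n. (norm (q n))^2) summable_on UNIV) \<and>
           (\<forall>n. q n =
              - (4 * pi / csqrt (of_real (\<omega> * of_int n) - \<i> * p)) *
                  infsum (\<lambda>k. \<alpha> k * q (n + k)) (UNIV - {0})
              - 2 * \<i> * sqrt (2 * pi) /
                  (csqrt (of_real (\<omega> * of_int n) - \<i> * p) *
                   (1 + csqrt (of_real (\<omega> * of_int n) - \<i> * p))))"
      note h1 = conjunct1[OF h] and h2 = conjunct2[OF h]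
      define Cq where "Cq = sqrt (\<Sum>\<^sub>\<infinity>n. (norm (q n))^2)"
      have qb: "norm (q m) \<le> Cq" for m
      proof -
        have "sum (\<lambda>n. (norm (q n))^2) {m} \<le> (\<Sum>\<^sub>\<infinity>n. (norm (q n))^2)"
          by (rule finite_sum_le_infsum[OF h1]) auto
        then have "(norm (q m))^2 \<le> (\<Sum>\<^sub>\<infinity>n. (norm (q n))^2)" by simp
        then show ?thesis unfolding Cq_def by (rule real_le_rsqrt)
      qed
      have snz: "S.sig m t \<noteq> 0" for m
      proof (cases "m = 0")
        case True then show ?thesis using tau0 by (simp add: S.sig_zero t_def)
      next
        case False then show ?thesis by (rule S.sig_nz[OF tb0])
      qed
      have eqS: "q m = - (4 * pi / S.sig m t) * (\<Sum>\<^sub>\<infinity>k. \<alpha> k * q (m + k)) - S.c0 / (S.sig m t * (1 + S.sig m t))" for m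
      proof -
        have hm: "q m = - (4 * pi / csqrt (of_real (\<omega> * of_int m) - \<i> * p)) *
                  infsum (\<lambda>k. \<alpha> k * q (m + k)) (UNIV - {0})
              - 2 * \<i> * sqrt (2 * pi) /
                  (csqrt (of_real (\<omega> * of_int m) - \<i> * p) *
                   (1 + csqrt (of_real (\<omega> * of_int m) - \<i> * p)))"
          by (rule spec[OF h2])
        show ?thesis using hm unfolding sigeq infeq c0eq .
      qed
      have "q n = S.Q n t" by (rule S.Q_sol[OF r1(2,3) tb1 snz qb eqS])
      also have "\<dots> = fst (EO n) (t^2) + t * snd (EO n) (t^2)" by (rule EO(3)[OF tb1])
      also have "fst (EO n) (t^2) = c n p" by (simp add: c_def p_def t2)
      also have "t * snd (EO n) (t^2) = d n p * csqrt p"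
      proof -
        have "d n p * csqrt p = snd (EO n) (t^2) * (((1 - \<i>) / complex_of_real (sqrt 2)) * ((1 + \<i>) / complex_of_real (sqrt 2))) * t"
        proof -
          have mip: "- \<i> * p = t^2" by (simp add: p_def t2)
          show ?thesis unfolding d_def csp mip by (simp only: mult.assoc)
        qed
        then show ?thesis using dfac by simp
      qed
      finally show "q n = c n p + d n p * csqrt p" .
    qed
  qed
  show ?thesis using part1 part2 r12 by blast
qed

end
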